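(* Let $m\ge1$ be fixed. For each $n$ let $n_0=n$, $n_1=n_1(n),\dots,n_m=n_m(n)=p$ be positive integers with $\lim_{n\to\infty} n/n_q(n)=y_q>0$ for $q=1,\dots,m$. Let $\mathbf X^{(q)}=\big(n_q^{-1/2}X^{(q)}_{jk}\big)$, $q=1,\dots,m$, be independent random matrices of sizes $n_{q-1}\times n_q$, where the $X^{(q)}_{jk}$ are independent complex random variables with $\mathbf E X^{(q)}_{jk}=0$, $\mathbf E|X^{(q)}_{jk}|^2=1$. Let $\mathbb F:\mathcal M_{n_0\times n_1}\times\cdots\times\mathcal M_{n_{m-1}\times n_m}\to\mathcal M_{n\times p}$ be a map, and write $\mathbf F_{\mathbf Z}=\mathbb F(\mathbf Z^{(1)},\dots,\mathbf Z^{(m)})$. Assume: (i) (Lindeberg condition) for every $\tau>0$, $L_n(\tau):=\frac1{n^2}\sum_{q=1}^m\sum_{j=1}^{n_{q-1}}\sum_{k=1}^{n_q}\mathbf E|X^{(q)}_{jk}|^2\mathbb I\{|X^{(q)}_{jk}|>\tau\sqrt n\}\to0$ as $n\to\infty$; (ii) (rank condition) there is a constant $C(\mathbb F)$ such that for all tuples $(\mathbf A^{(q)}),(\mathbf B^{(q)})$, $\operatorname{rank}\{\mathbb F(\mathbf A^{(1)},\dots,\mathbf A^{(m)})-\mathbb F(\mathbf B^{(1)},\dots,\mathbf B^{(m)})\}\le C(\mathbb F)\sum_{q=1}^m\operatorname{rank}\{\mathbf A^{(q)}-\mathbf B^{(q)}\}$. Let $(\tau_n)$ be a sequence with $\tau_n\to0$,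 $L_n(\tau_n)\tau_n^{-4}\to0$ and $\tau_n\ge n^{-1/3}$, and let $\widehat{\mathbf X}^{(q)}=\big(n_q^{-1/2}\widehat X^{(q)}_{jk}\big)$ with $\widehat X^{(q)}_{jk}=X^{(q)}_{jk}\mathbb I\{|X^{(q)}_{jk}|\le\tau_n\sqrt n\}$. Let $\mathbf B$ be a non-random $n\times p$ matrix, let $s_1(\mathbf X)\ge\dots\ge s_n(\mathbf X)$ and $s_1(\widehat{\mathbf X})\ge\dots\ge s_n(\widehat{\mathbf X})$ be the singular values of $\mathbf F_{\mathbf X}+\mathbf B$ and $\mathbf F_{\widehat{\mathbf X}}+\mathbf B$, and set $\mathcal F_{\mathbf X}(x)=\frac1n\sum_{j}\mathbb I\{s_j^2(\mathbf X)\le x\}$, $\mathcal F_{\widehat{\mathbf X}}(x)=\frac1n\sum_j\mathbb I\{s_j^2(\widehat{\mathbf X})\le x\}$, $m_{\mathbf X}(z)=\frac1n\sum_j(s_j^2(\mathbf X)-z)^{-1}$, $m_{\widehat{\mathbf X}}(z)=\frac1n\sum_j(s_j^2(\widehat{\mathbf X})-z)^{-1}$. Then there is a constant $C$ such that $$\mathbf E\sup_x|\mathcal F_{\mathbf X}(x)-\mathcal F_{\widehat{\mathbf X}}(x)|\le C\tau_n^2,$$ and for any $z=u+iv$ with $v>0$, $\mathbf E|m_{\mathbf X}(z)-m_{\widehat{\mathbf X}}(z)|\le Cv^{-1}\tau_n^2$.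
   Context: $\mathcal M_{a\times b}$ denotes the space of complex $a\times b$ matrices. *)

theory Defs
  imports "HOL-Probability.Probability" "Jordan_Normal_Form.Jordan_Normal_Form" "Jordan_Normal_Form.DL_Rank" "Jordan_Normal_Form.Schur_Decomposition"
begin

definition mrank :: "complex mat \<Rightarrow> nat" where
  "mrank A = vec_space.rank (dim_row A) A"

text \<open>Squared singular values of M (n x p), i.e. the eigenvalues of M M^* counted with
  multiplicity (a multiset of n complex numbers, all real and nonnegative).\<close>
definition sq_singvals :: "complex mat \<Rightarrow> complex multiset" where
  "sq_singvals M = proots (char_poly (M * mat_adjoint M))"

definition esd :: "nat \<Rightarrow> complex mat \<Rightarrow> real \<Rightarrow> real" where
  "esd n M x = real (size (filter_mset (\<lambda>l. Re l \<le> x) (sq_singvals M))) / real n"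

definition stieltjes :: "nat \<Rightarrow> complex mat \<Rightarrow> complex \<Rightarrow> complex" where
  "stieltjes n M z = (\<Sum>\<^sub># (image_mset (\<lambda>l. 1 / (l - z)) (sq_singvals M))) / of_nat n"

text \<open>Lindeberg ratio L_n(tau); X n q j k is the (j,k) entry (0-based) of the unnormalised
  q-th matrix at stage n, N n q = n_q(n).\<close>
definition lindeberg ::
  "(nat \<Rightarrow> 'a measure) \<Rightarrow> nat \<Rightarrow> (nat \<Rightarrow> nat \<Rightarrow> nat) \<Rightarrow>
   (nat \<Rightarrow> nat \<Rightarrow> nat \<Rightarrow> nat \<Rightarrow> 'a \<Rightarrow> complex) \<Rightarrow> nat \<Rightarrow> real \<Rightarrow> real" where
  "lindeberg M m N X n \<tau> = (1 / (real n)^2) *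
     (\<Sum>q\<in>{1..m}. \<Sum>j<N n (q - 1). \<Sum>k<N n q.
        prob_space.expectation (M n) (\<lambda>\<omega>. (cmod (X n q j k \<omega>))^2 *
            indicator {t. t > \<tau> * sqrt (real n)} (cmod (X n q j k \<omega>))))"

definition rmat :: "(nat \<Rightarrow> nat \<Rightarrow> nat) \<Rightarrow> (nat \<Rightarrow> nat \<Rightarrow> nat \<Rightarrow> nat \<Rightarrow> 'a \<Rightarrow> complex)
   \<Rightarrow> nat \<Rightarrow> 'a \<Rightarrow> nat \<Rightarrow> complex mat" where
  "rmat N X n \<omega> q = mat (N n (q - 1)) (N n q)
      (\<lambda>(j, k). X n q j k \<omega> / complex_of_real (sqrt (real (N n q))))"

definition trunc :: "(nat \<Rightarrow> real) \<Rightarrow> (nat \<Rightarrow> nat \<Rightarrow> nat \<Rightarrow> nat \<Rightarrow> 'a \<Rightarrow> complex)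
   \<Rightarrow> nat \<Rightarrow> nat \<Rightarrow> nat \<Rightarrow> nat \<Rightarrow> 'a \<Rightarrow> complex" where
  "trunc \<tau> X n q j k \<omega> = (if cmod (X n q j k \<omega>) \<le> \<tau> n * sqrt (real n) then X n q j k \<omega> else 0)"

end

theory Submission
  imports Defs
begin

lemma markov_entry:
  fixes X :: "'a \<Rightarrow> complex"
  assumes Xm: "X \<in> borel_measurable M" and int: "integrable M (\<lambda>\<omega>. (cmod (X \<omega>))^2)" and a: "a > 0"
  shows "(\<integral>\<^sup>+\<omega>. ennreal (indicator {t. t > a} (cmod (X \<omega>))) \<partial>M)
     \<le> ennreal ((\<integral>\<omega>. (cmod (X \<omega>))^2 * indicator {t. t > a} (cmod (X \<omega>)) \<partial>M) / a^2)"
proof -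
  define g where "g \<omega> = (cmod (X \<omega>))^2 * indicator {t. t > a} (cmod (X \<omega>)) / a^2" for \<omega>
  have gm: "g \<in> borel_measurable M" unfolding g_def using Xm by measurable
  have gint: "integrable M g"
  proof (rule Bochner_Integration.integrable_bound[OF integrable_divide[OF int, of "a^2"] gm])
    show "AE x in M. norm (g x) \<le> norm ((cmod (X x))^2 / a^2)"
      unfolding g_def by (auto simp: indicator_def)
  qed
  have "(\<integral>\<^sup>+\<omega>. ennreal (indicator {t. t > a} (cmod (X \<omega>))) \<partial>M) \<le> (\<integral>\<^sup>+\<omega>. ennreal (g \<omega>) \<partial>M)"
  proof (rule nn_integral_mono)
    fix \<omega>
    show "ennreal (indicator {t. t > a} (cmod (X \<omega>))) \<le> ennreal (g \<omega>)"
    proof (cases "cmod (X \<omega>) > a")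
      case True
      then have "a^2 \<le> (cmod (X \<omega>))^2" using a by (intro power_mono) auto
      then have "1 \<le> (cmod (X \<omega>))^2 / a^2" using a by simp
      then show ?thesis using True unfolding g_def by (simp add: indicator_def)
    next
      case False then show ?thesis unfolding g_def by (simp add: indicator_def)
    qed
  qed
  also have "\<dots> = ennreal (integral\<^sup>L M g)"
    by (rule nn_integral_eq_integral[OF gint], auto simp: g_def indicator_def)
  also have "integral\<^sup>L M g = (\<integral>\<omega>. (cmod (X \<omega>))^2 * indicator {t. t > a} (cmod (X \<omega>)) \<partial>M) / a^2"
    unfolding g_def by simp
  finally show ?thesis .
qed


lemma count_integral_bound:
  fixes X :: "nat \<Rightarrow> nat \<Rightarrow> nat \<Rightarrow> 'a \<Rightarrow> complex"
  assumes meas: "\<And>q j k. X q j k \<in> borel_measurable M"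
   and int: "\<And>q j k. q \<in> {1..m} \<Longrightarrow> j < J q \<Longrightarrow> k < K q \<Longrightarrow> integrable M (\<lambda>\<omega>. (cmod (X q j k \<omega>))^2)"
   and a: "a > 0"
  shows "(\<integral>\<^sup>+\<omega>. ennreal (\<Sum>q\<in>{1..m}. \<Sum>j<J q. \<Sum>k<K q. indicator {t. t > a} (cmod (X q j k \<omega>))) \<partial>M)
    \<le> ennreal ((\<Sum>q\<in>{1..m}. \<Sum>j<J q. \<Sum>k<K q. \<integral>\<omega>. (cmod (X q j k \<omega>))^2 * indicator {t. t > a} (cmod (X q j k \<omega>)) \<partial>M) / a^2)"
proof -
  define E where "E q j k = (\<integral>\<omega>. (cmod (X q j k \<omega>))^2 * indicator {t. t > a} (cmod (X q j k \<omega>)) \<partial>M)" for q j k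
  have E0: "\<And>q j k. E q j k \<ge> 0" unfolding E_def by (rule integral_nonneg_AE, auto simp: indicator_def)
  have im: "\<And>q j k. (\<lambda>\<omega>. ennreal (indicator {t. t > a} (cmod (X q j k \<omega>)))) \<in> borel_measurable M"
    using meas by measurable
  have "(\<integral>\<^sup>+\<omega>. ennreal (\<Sum>q\<in>{1..m}. \<Sum>j<J q. \<Sum>k<K q. indicator {t. t > a} (cmod (X q j k \<omega>))) \<partial>M)
     = (\<integral>\<^sup>+\<omega>. (\<Sum>q\<in>{1..m}. \<Sum>j<J q. \<Sum>k<K q. ennreal (indicator {t. t > a} (cmod (X q j k \<omega>)))) \<partial>M)"
    by (rule nn_integral_cong, simp add: sum_nonneg)
  also have "\<dots> = (\<Sum>q\<in>{1..m}. \<Sum>j<J q. \<Sum>k<K q. \<integral>\<^sup>+\<omega>. ennreal (indicator {t. t > a} (cmod (X q j k \<omega>))) \<partial>M)"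
    using im by (simp add: nn_integral_sum borel_measurable_sum del: sum_ennreal)
  also have "\<dots> \<le> (\<Sum>q\<in>{1..m}. \<Sum>j<J q. \<Sum>k<K q. ennreal (E q j k / a^2))"
    unfolding E_def by (intro sum_mono markov_entry[OF meas int a], auto)
  also have "\<dots> = ennreal (\<Sum>q\<in>{1..m}. \<Sum>j<J q. \<Sum>k<K q. E q j k / a^2)"
    using E0 by (simp add: sum_nonneg)
  also have "(\<Sum>q\<in>{1..m}. \<Sum>j<J q. \<Sum>k<K q. E q j k / a^2) = (\<Sum>q\<in>{1..m}. \<Sum>j<J q. \<Sum>k<K q. E q j k) / a^2"
    by (simp add: sum_divide_distrib)
  finally show ?thesis unfolding E_def .
qed


lemma onb_exists:
  fixes v :: "complex vec"
  assumes v: "v \<in> carrier_vec n" and v0: "v \<noteq> 0\<^sub>v n"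
  shows "\<exists>us. length us = n \<and> set us \<subseteq> carrier_vec n \<and>
     (\<forall>i<n. \<forall>j<n. us!i \<bullet>c us!j = (if i = j then 1 else 0)) \<and> (\<exists>c. us!0 = c \<cdot>\<^sub>v v)"
proof -
  interpret cof_vec_space n "TYPE(complex)" .
  define b where "b = basis_completion v"
  define ws where "ws = gram_schmidt n b"
  from basis_completion[OF v v0, folded b_def]
  have dist_b: "distinct b" and indep: "\<not> lin_dep (set b)" and b: "set b \<subseteq> carrier_vec n"
    and hdb: "hd b = v" and len_b: "length b = n" by auto
  have n: "n \<noteq> 0" using v0 v by (auto)
  from hdb len_b n obtain vs where bv: "b = v # vs" by (cases b, auto)
  from gram_schmidt_result[OF b dist_b indep refl, folded ws_def]
  have ws: "set ws \<subseteq> carrier_vec n" "corthogonal ws" "length ws = n"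
    by (auto simp: len_b)
  from gram_schmidt_hd[OF v, of vs, folded bv] have hdws: "hd ws = v" unfolding ws_def .
  define us where "us = map (\<lambda>w. complex_of_real (1 / sqrt (Re (w \<bullet>c w))) \<cdot>\<^sub>v w) ws"
  have wsc: "\<And>i. i < n \<Longrightarrow> ws!i \<in> carrier_vec n" using ws by auto
  have pos: "\<And>i. i < n \<Longrightarrow> Re (ws!i \<bullet>c ws!i) > 0 \<and> ws!i \<bullet>c ws!i = of_real (Re (ws!i \<bullet>c ws!i))"
  proof -
    fix i assume i: "i < n"
    have ne: "ws!i \<bullet>c ws!i \<noteq> 0" using corthogonalD[OF ws(2)] i ws(3) by auto
    have ge: "ws!i \<bullet>c ws!i \<ge> 0" by (rule conjugate_square_ge_0_vec)
    then show "Re (ws!i \<bullet>c ws!i) > 0 \<and> ws!i \<bullet>c ws!i = of_real (Re (ws!i \<bullet>c ws!i))"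
      using ne by (auto simp: complex_eq_iff less_eq_complex_def)
  qed
  have ex: "\<exists>c. us!0 = c \<cdot>\<^sub>v v" using n ws hdws
      by (cases ws) (auto simp: us_def)
  show ?thesis
  proof (rule exI[of _ us], intro conjI allI impI)
    show "length us = n" using ws by (simp add: us_def)
    show "set us \<subseteq> carrier_vec n" using ws by (auto simp: us_def)
    show "\<exists>c. us!0 = c \<cdot>\<^sub>v v" by (rule ex)
    fix i j assume i: "i < n" and j: "j < n"
    let ?ci = "complex_of_real (1 / sqrt (Re (ws!i \<bullet>c ws!i)))"
    let ?cj = "complex_of_real (1 / sqrt (Re (ws!j \<bullet>c ws!j)))"
    have "us!i \<bullet>c us!j = (?ci \<cdot>\<^sub>v ws!i) \<bullet> conjugate (?cj \<cdot>\<^sub>v ws!j)"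
      using i j ws by (simp add: us_def)
    also have "\<dots> = ?ci * cnj ?cj * (ws!i \<bullet>c ws!j)"
      using wsc[OF i] wsc[OF j]
      by (simp add: conjugate_smult_vec scalar_prod_smult_distrib smult_scalar_prod_distrib)
    finally have eq: "us!i \<bullet>c us!j = ?ci * cnj ?cj * (ws!i \<bullet>c ws!j)" .
    show "us!i \<bullet>c us!j = (if i = j then 1 else 0)"
    proof (cases "i = j")
      case True
      have p: "Re (ws!j \<bullet>c ws!j) > 0" and e: "ws!j \<bullet>c ws!j = of_real (Re (ws!j \<bullet>c ws!j))"
        using pos[OF j] by auto
      have eqj: "us!j \<bullet>c us!j = ?cj * cnj ?cj * (ws!j \<bullet>c ws!j)" using eq unfolding True .
      define r where "r = Re (ws!j \<bullet>c ws!j)"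
      have e': "ws!j \<bullet>c ws!j = of_real r" using e r_def by simp
      have "us!i \<bullet>c us!j = us!j \<bullet>c us!j" using True by simp
      also have "\<dots> = of_real (1/sqrt r) * cnj (of_real (1/sqrt r)) * (ws!j \<bullet>c ws!j)"
        unfolding eqj r_def ..
      also have "\<dots> = of_real (1 / sqrt r) * of_real (1 / sqrt r) * of_real r"
        by (simp only: e' complex_cnj_complex_of_real)
      also have "\<dots> = of_real ((1 / sqrt r) * (1 / sqrt r) * r)" by (simp only: of_real_mult)
      also have "(1 / sqrt r) * (1 / sqrt r) * r = 1"
      proof -
        have s: "sqrt r * sqrt r = r" using p r_def by simp
        have "(1 / sqrt r) * (1 / sqrt r) * r = r / (sqrt r * sqrt r)" by simp
        also have "\<dots> = 1" using s p r_def by simp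
        finally show ?thesis .
      qed
      finally show ?thesis using True by simp
    next
      case False
      then have "ws!i \<bullet>c ws!j = 0" using corthogonalD[OF ws(2)] i j ws(3) by auto
      then show ?thesis using eq False by simp
    qed
  qed
qed


lemma mat_adjoint_entry: "mat_adjoint (A::complex mat) = mat (dim_col A) (dim_row A) (\<lambda>(i,j). cnj (A $$ (j,i)))"
  unfolding mat_adjoint_def
  by (rule eq_matI, auto simp: mat_of_rows_def conjugate_vec_def)

lemma adj_carrier[simp]: "A \<in> carrier_mat a b \<Longrightarrow> mat_adjoint (A::complex mat) \<in> carrier_mat b a"
  by (simp add: mat_adjoint_entry)

lemma adj_index[simp]: "i < dim_col A \<Longrightarrow> j < dim_row A \<Longrightarrow> mat_adjoint (A::complex mat) $$ (i,j) = cnj (A $$ (j,i))"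
  by (simp add: mat_adjoint_entry)

lemma adj_dims[simp]: "dim_row (mat_adjoint (A::complex mat)) = dim_col A" "dim_col (mat_adjoint A) = dim_row A"
  by (simp_all add: mat_adjoint_entry)

lemma mult_entry: "A \<in> carrier_mat a b \<Longrightarrow> B \<in> carrier_mat b c \<Longrightarrow> i < a \<Longrightarrow> j < c \<Longrightarrow>
   (A * B) $$ (i,j) = (\<Sum>k<b. A $$ (i,k) * B $$ (k,j))"
  by (simp add: scalar_prod_def atLeast0LessThan)

lemma multv_entry: "A \<in> carrier_mat a b \<Longrightarrow> v \<in> carrier_vec b \<Longrightarrow> i < a \<Longrightarrow>
   (A *\<^sub>v v) $ i = (\<Sum>k<b. A $$ (i,k) * v $ k)"
  by (simp add: scalar_prod_def atLeast0LessThan)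

lemma adj_adj[simp]: "mat_adjoint (mat_adjoint (A::complex mat)) = A"
  by (rule eq_matI, auto)

lemma adj_mult: assumes A: "A \<in> carrier_mat a b" and B: "B \<in> carrier_mat b c"
  shows "mat_adjoint (A * (B::complex mat)) = mat_adjoint B * mat_adjoint A"
proof (rule eq_matI)
  fix i j assume i: "i < dim_row (mat_adjoint B * mat_adjoint A)" and j: "j < dim_col (mat_adjoint B * mat_adjoint A)"
  then have i: "i < c" and j: "j < a" using A B by auto
  have "mat_adjoint (A * B) $$ (i,j) = cnj ((A*B) $$ (j,i))" using A B i j by simp
  also have "\<dots> = cnj (\<Sum>k<b. A $$ (j,k) * B $$ (k,i))" using mult_entry[OF A B j i] by simp
  also have "\<dots> = (\<Sum>k<b. mat_adjoint B $$ (i,k) * mat_adjoint A $$ (k,j))"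
    using A B i j by (simp add: mult.commute)
  also have "\<dots> = (mat_adjoint B * mat_adjoint A) $$ (i,j)"
    using mult_entry[OF adj_carrier[OF B] adj_carrier[OF A] i j] by simp
  finally show "mat_adjoint (A * B) $$ (i,j) = (mat_adjoint B * mat_adjoint A) $$ (i,j)" .
qed (insert A B, auto)


declare sum.lessThan_Suc[simp del]
declare sum.lessThan_Suc_shift[simp]

lemma herm_diag_ex:
  fixes A :: "complex mat"
  assumes "A \<in> carrier_mat n n" "mat_adjoint A = A"
  shows "\<exists>U. U \<in> carrier_mat n n \<and> mat_adjoint U * U = 1\<^sub>m n \<and>
           (\<forall>i<n. \<forall>j<n. i \<noteq> j \<longrightarrow> (mat_adjoint U * A * U) $$ (i,j) = 0)"
  using assms
proof (induction n arbitrary: A)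
  case 0
  then show ?case by (intro exI[of _ "1\<^sub>m 0"]) (auto intro!: eq_matI)
next
  case (Suc n)
  define N where "N = Suc n"
  have A: "A \<in> carrier_mat N N" and herm: "mat_adjoint A = A" using Suc.prems N_def by auto
  obtain as where cp: "char_poly A = (\<Prod>a\<leftarrow>as. [:- a, 1:])" and las: "length as = N"
    using char_poly_factorized[OF A] by auto
  then obtain e rest where as: "as = e # rest" unfolding N_def by (cases as) auto
  have "poly (char_poly A) e = 0" unfolding cp as by (simp add: poly_prod_list)
  then have ev: "eigenvalue A e" using eigenvalue_root_char_poly[OF A] by simp
  define v where "v = find_eigenvector A e"
  have "eigenvector A v e" unfolding v_def by (rule find_eigenvector[OF A ev])
  then have v: "v \<in> carrier_vec N" and v0: "v \<noteq> 0\<^sub>v N" and Av: "A *\<^sub>v v = e \<cdot>\<^sub>v v"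
    using A unfolding eigenvector_def by auto
  obtain us c where lus: "length us = N" and usc: "set us \<subseteq> carrier_vec N"
    and orth: "\<And>i j. i<N \<Longrightarrow> j<N \<Longrightarrow> us!i \<bullet>c us!j = (if i = j then 1 else 0)"
    and us0: "us!0 = c \<cdot>\<^sub>v v"
    using onb_exists[OF v v0] by blast
  define W where "W = mat_of_cols N us"
  have W: "W \<in> carrier_mat N N" unfolding W_def using mat_of_cols_carrier(1)[of N us] lus by simp
  have Wij: "\<And>i j. i < N \<Longrightarrow> j < N \<Longrightarrow> W $$ (i,j) = us!j $ i"
    unfolding W_def using lus by (simp add: mat_of_cols_index)
  have usj: "\<And>j. j < N \<Longrightarrow> us!j \<in> carrier_vec N" using usc lus by auto
  have WW: "mat_adjoint W * W = 1\<^sub>m N"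
  proof (rule eq_matI)
    fix i j assume "i < dim_row (1\<^sub>m N)" "j < dim_col (1\<^sub>m N)"
    then have i: "i < N" and j: "j < N" by auto
    have "(mat_adjoint W * W) $$ (i,j) = (\<Sum>k<N. cnj (W $$ (k,i)) * W $$ (k,j))"
      using mult_entry[OF adj_carrier[OF W] W i j] i j W by simp
    also have "\<dots> = (\<Sum>k<N. us!j $ k * cnj (us!i $ k))"
      by (rule sum.cong, auto simp: Wij i j mult.commute)
    also have "\<dots> = us!j \<bullet>c us!i"
      using usj[OF i] usj[OF j] by (simp add: scalar_prod_def atLeast0LessThan)
    also have "\<dots> = 1\<^sub>m N $$ (i,j)" using orth[OF j i] i j by auto
    finally show "(mat_adjoint W * W) $$ (i,j) = 1\<^sub>m N $$ (i,j)" .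
  qed (insert W, auto)
  define A' where "A' = mat_adjoint W * A * W"
  have A': "A' \<in> carrier_mat N N" unfolding A'_def using W A by auto
  have hA': "mat_adjoint A' = A'"
    unfolding A'_def using W A herm
    by (simp add: adj_mult[of _ N N _ N] assoc_mult_mat[of _ N N _ N _ N])
  have AW0: "\<And>k. k < N \<Longrightarrow> (A * W) $$ (k,0) = e * W $$ (k,0)"
  proof -
    fix k assume k: "k < N"
    have N0: "0 < N" unfolding N_def by simp
    have "(A * W) $$ (k,0) = (\<Sum>l<N. A $$ (k,l) * W $$ (l,0))" by (rule mult_entry[OF A W k N0])
    also have "\<dots> = (\<Sum>l<N. A $$ (k,l) * (c * v $ l))"
      by (rule sum.cong, insert v, auto simp: Wij N0 us0)
    also have "\<dots> = c * (A *\<^sub>v v) $ k" using multv_entry[OF A v k]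
      by (simp add: sum_distrib_left ac_simps)
    also have "\<dots> = e * W $$ (k,0)" using Av k v N0 by (simp add: Wij us0)
    finally show "(A * W) $$ (k,0) = e * W $$ (k,0)" .
  qed
  have A'col: "\<And>i. i < N \<Longrightarrow> A' $$ (i,0) = (if i = 0 then e else 0)"
  proof -
    fix i assume i: "i < N"
    have N0: "0 < N" unfolding N_def by simp
    have "A' $$ (i,0) = (mat_adjoint W * (A * W)) $$ (i,0)"
      unfolding A'_def by (rule arg_cong[of _ _ "\<lambda>X. X $$ (i,0)"], rule assoc_mult_mat[OF adj_carrier[OF W] A W])
    also have "\<dots> = (\<Sum>k<N. mat_adjoint W $$ (i,k) * (A * W) $$ (k,0))"
      by (rule mult_entry[OF adj_carrier[OF W] _ i N0], insert A W, auto)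
    also have "\<dots> = e * (\<Sum>k<N. mat_adjoint W $$ (i,k) * W $$ (k,0))"
      by (simp add: AW0 sum_distrib_left ac_simps)
    also have "(\<Sum>k<N. mat_adjoint W $$ (i,k) * W $$ (k,0)) = (mat_adjoint W * W) $$ (i,0)"
      by (rule mult_entry[OF adj_carrier[OF W] W i N0, symmetric])
    also have "\<dots> = (if i = 0 then 1 else 0)" unfolding WW using i N0 by simp
    finally show "A' $$ (i,0) = (if i = 0 then e else 0)" by simp
  qed
  have A'row: "\<And>j. j < N \<Longrightarrow> j \<noteq> 0 \<Longrightarrow> A' $$ (0,j) = 0"
  proof -
    fix j assume j: "j < N" "j \<noteq> 0"
    have "A' $$ (0,j) = mat_adjoint A' $$ (0,j)" using hA' by simp
    also have "\<dots> = cnj (A' $$ (j,0))" using A' j unfolding N_def by simp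
    also have "\<dots> = 0" using A'col[OF j(1)] j by simp
    finally show "A' $$ (0,j) = 0" .
  qed
  define A3 where "A3 = mat n n (\<lambda>(i,j). A' $$ (Suc i, Suc j))"
  have A3: "A3 \<in> carrier_mat n n" unfolding A3_def by simp
  have hA3: "mat_adjoint A3 = A3"
  proof (rule eq_matI)
    fix i j assume "i < dim_row A3" "j < dim_col A3"
    then have i: "i < n" and j: "j < n" unfolding A3_def by auto
    have "mat_adjoint A3 $$ (i,j) = cnj (A' $$ (Suc j, Suc i))" using i j by (simp add: A3_def)
    also have "\<dots> = mat_adjoint A' $$ (Suc i, Suc j)" using i j A' unfolding N_def by simp
    also have "\<dots> = A3 $$ (i,j)" using hA' i j by (simp add: A3_def)
    finally show "mat_adjoint A3 $$ (i,j) = A3 $$ (i,j)" .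
  qed (auto simp: A3_def)
  obtain U3 where U3: "U3 \<in> carrier_mat n n" and UU3: "mat_adjoint U3 * U3 = 1\<^sub>m n"
    and D3: "\<And>i j. i<n \<Longrightarrow> j<n \<Longrightarrow> i \<noteq> j \<Longrightarrow> (mat_adjoint U3 * A3 * U3) $$ (i,j) = 0"
    using Suc.IH[OF A3 hA3] by blast
  define V where "V = mat N N (\<lambda>(i,j). if i = 0 \<and> j = 0 then 1 else if i = 0 \<or> j = 0 then 0 else U3 $$ (i-1,j-1))"
  have V: "V \<in> carrier_mat N N" unfolding V_def by simp
  have V00: "V $$ (0,0) = 1" and V0j: "\<And>j. j < n \<Longrightarrow> V $$ (0, Suc j) = 0"
    and Vi0: "\<And>i. i < n \<Longrightarrow> V $$ (Suc i, 0) = 0"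
    and Vij: "\<And>i j. i < n \<Longrightarrow> j < n \<Longrightarrow> V $$ (Suc i, Suc j) = U3 $$ (i,j)"
    unfolding V_def N_def by auto
  have N0: "0 < N" unfolding N_def by simp
  have sumN: "\<And>f. (\<Sum>k<N. f k) = f 0 + (\<Sum>k<n. f (Suc k))" unfolding N_def
    by (rule sum.lessThan_Suc_shift)
  define U where "U = W * V"
  have U: "U \<in> carrier_mat N N" unfolding U_def using W V by auto
  have adjU: "mat_adjoint U = mat_adjoint V * mat_adjoint W"
    unfolding U_def by (rule adj_mult[OF W V])
  note adjU' = adjU[unfolded U_def]
  have VV: "mat_adjoint V * V = 1\<^sub>m N"
  proof (rule eq_matI)
    fix i j assume "i < dim_row (1\<^sub>m N)" "j < dim_col (1\<^sub>m N)"
    then have i: "i < N" and j: "j < N" by auto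
    have e1: "(mat_adjoint V * V) $$ (i,j) = (\<Sum>k<N. cnj (V $$ (k,i)) * V $$ (k,j))"
      using mult_entry[OF adj_carrier[OF V] V i j] i j V by simp
    show "(mat_adjoint V * V) $$ (i,j) = 1\<^sub>m N $$ (i,j)"
    proof (cases i)
      case 0
      show ?thesis
      proof (cases j)
        case 0 then show ?thesis using e1 \<open>i = 0\<close> N0 by (simp add: sumN V00 Vi0)
      next
        case (Suc j') then show ?thesis using e1 \<open>i = 0\<close> j unfolding N_def
          by (simp add: sumN V00 Vi0 V0j)
      qed
    next
      case (Suc i')
      show ?thesis
      proof (cases j)
        case 0 then show ?thesis using e1 \<open>i = Suc i'\<close> i unfolding N_def
          by (simp add: sumN V00 Vi0 V0j)
      next
        case (Suc j')
        have i': "i' < n" and j': "j' < n" using i j \<open>i = Suc i'\<close> Suc unfolding N_def by auto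
        have "(mat_adjoint V * V) $$ (i,j) = (\<Sum>k<n. cnj (U3 $$ (k,i')) * U3 $$ (k,j'))"
          using e1 \<open>i = Suc i'\<close> Suc i' j' by (simp add: sumN V0j Vij)
        also have "\<dots> = (mat_adjoint U3 * U3) $$ (i',j')"
          using mult_entry[OF adj_carrier[OF U3] U3 i' j'] U3 i' j' by simp
        also have "\<dots> = 1\<^sub>m N $$ (i,j)" unfolding UU3 using i' j' \<open>i = Suc i'\<close> Suc i j by simp
        finally show ?thesis .
      qed
    qed
  qed (insert V, auto)
  have UU: "mat_adjoint U * U = 1\<^sub>m N"
  proof -
    have aW: "mat_adjoint W \<in> carrier_mat N N" and aV: "mat_adjoint V \<in> carrier_mat N N"
      using W V by auto
    have "mat_adjoint U * U = mat_adjoint V * mat_adjoint W * (W * V)"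
      unfolding U_def adjU' ..
    also have "\<dots> = mat_adjoint V * (mat_adjoint W * (W * V))"
      by (rule assoc_mult_mat[OF aV aW], insert W V, auto)
    also have "mat_adjoint W * (W * V) = (mat_adjoint W * W) * V"
      by (rule assoc_mult_mat[OF aW W V, symmetric])
    also have "\<dots> = V" unfolding WW using V by simp
    also have "mat_adjoint V * V = 1\<^sub>m N" by (rule VV)
    finally show ?thesis .
  qed
  have UAU: "mat_adjoint U * A * U = mat_adjoint V * (A' * V)"
  proof -
    have aW: "mat_adjoint W \<in> carrier_mat N N" and aV: "mat_adjoint V \<in> carrier_mat N N"
      using W V by auto
    have "mat_adjoint U * A * U = mat_adjoint V * mat_adjoint W * A * (W * V)"
      unfolding U_def adjU' ..
    also have "\<dots> = mat_adjoint V * (mat_adjoint W * A * (W * V))"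
    proof -
      have "mat_adjoint V * mat_adjoint W * A = mat_adjoint V * (mat_adjoint W * A)"
        by (rule assoc_mult_mat[OF aV aW A])
      then have "mat_adjoint V * mat_adjoint W * A * (W * V) = mat_adjoint V * (mat_adjoint W * A) * (W * V)"
        by simp
      also have "\<dots> = mat_adjoint V * (mat_adjoint W * A * (W * V))"
        by (rule assoc_mult_mat[OF aV], insert aW A W V, auto)
      finally show ?thesis .
    qed
    also have "mat_adjoint W * A * (W * V) = A' * V"
      unfolding A'_def by (rule assoc_mult_mat[symmetric], insert aW A W V, auto)
    finally show ?thesis .
  qed
  have A'V0: "\<And>k. k < N \<Longrightarrow> (A' * V) $$ (k,0) = A' $$ (k,0)"
  proof -
    fix k assume k: "k < N"
    have "(A' * V) $$ (k,0) = (\<Sum>l<N. A' $$ (k,l) * V $$ (l,0))"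
      by (rule mult_entry[OF A' V k], simp add: N_def)
    then show "(A' * V) $$ (k,0) = A' $$ (k,0)" by (simp add: sumN V00 Vi0)
  qed
  have A'Vj: "\<And>k j. k < N \<Longrightarrow> j < n \<Longrightarrow> (A' * V) $$ (k,Suc j) = (\<Sum>l<n. A' $$ (k,Suc l) * U3 $$ (l,j))"
  proof -
    fix k j assume k: "k < N" and j: "j < n"
    have "(A' * V) $$ (k,Suc j) = (\<Sum>l<N. A' $$ (k,l) * V $$ (l,Suc j))"
      by (rule mult_entry[OF A' V k], insert j, simp add: N_def)
    then show "(A' * V) $$ (k,Suc j) = (\<Sum>l<n. A' $$ (k,Suc l) * U3 $$ (l,j))"
      using j by (simp add: sumN V0j Vij)
  qed
  have off: "\<And>i j. i<N \<Longrightarrow> j<N \<Longrightarrow> i \<noteq> j \<Longrightarrow> (mat_adjoint U * A * U) $$ (i,j) = 0"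
  proof -
    fix i j assume i: "i < N" and j: "j < N" and ij: "i \<noteq> j"
    have AV: "A' * V \<in> carrier_mat N N" using A' V by auto
    have e1: "(mat_adjoint U * A * U) $$ (i,j) = (\<Sum>k<N. cnj (V $$ (k,i)) * (A' * V) $$ (k,j))"
      unfolding UAU using mult_entry[OF adj_carrier[OF V] AV i j] i j V by simp
    show "(mat_adjoint U * A * U) $$ (i,j) = 0"
    proof (cases i)
      case 0
      then obtain j' where Sj: "j = Suc j'" using ij by (cases j) auto
      have j': "j' < n" using j Sj unfolding N_def by auto
      have "(mat_adjoint U * A * U) $$ (i,j) = (\<Sum>l<n. A' $$ (0,Suc l) * U3 $$ (l,j'))"
        using e1 0 Sj j' unfolding N_def by (simp add: sumN V00 Vi0 A'Vj[unfolded N_def])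
      also have "\<dots> = 0" using A'row unfolding N_def by simp
      finally show ?thesis .
    next
      case (Suc i')
      have i': "i' < n" using i Suc unfolding N_def by auto
      show ?thesis
      proof (cases j)
        case 0
        have "(mat_adjoint U * A * U) $$ (i,j) = (\<Sum>k<n. cnj (U3 $$ (k,i')) * A' $$ (Suc k, 0))"
          using e1 0 Suc i' unfolding N_def by (simp add: sumN V0j Vij A'V0[unfolded N_def])
        also have "\<dots> = 0" using A'col unfolding N_def by simp
        finally show ?thesis .
      next
        case (Suc j')
        have j': "j' < n" using j Suc unfolding N_def by auto
        have ij': "i' \<noteq> j'" using ij Suc \<open>i = Suc i'\<close> by auto
        have "(mat_adjoint U * A * U) $$ (i,j) =
           (\<Sum>k<n. cnj (U3 $$ (k,i')) * (\<Sum>l<n. A3 $$ (k,l) * U3 $$ (l,j')))"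
          using e1 Suc \<open>i = Suc i'\<close> i' j' unfolding N_def
          by (simp add: sumN V0j Vij A'Vj[unfolded N_def] A3_def)
        also have "\<dots> = (mat_adjoint U3 * (A3 * U3)) $$ (i',j')"
        proof -
          have "(mat_adjoint U3 * (A3 * U3)) $$ (i',j') = (\<Sum>k<n. mat_adjoint U3 $$ (i',k) * (A3 * U3) $$ (k,j'))"
            by (rule mult_entry[OF adj_carrier[OF U3] _ i' j'], insert A3 U3, auto)
          also have "\<dots> = (\<Sum>k<n. cnj (U3 $$ (k,i')) * (\<Sum>l<n. A3 $$ (k,l) * U3 $$ (l,j')))"
          proof (rule sum.cong[OF refl])
            fix k assume "k \<in> {..<n}"
            then have k: "k < n" by simp
            show "mat_adjoint U3 $$ (i',k) * (A3 * U3) $$ (k,j') = cnj (U3 $$ (k,i')) * (\<Sum>l<n. A3 $$ (k,l) * U3 $$ (l,j'))"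
              using mult_entry[OF A3 U3 k j'] U3 i' k by simp
          qed
          finally show ?thesis by simp
        qed
        also have "\<dots> = (mat_adjoint U3 * A3 * U3) $$ (i',j')"
          using assoc_mult_mat[OF adj_carrier[OF U3] A3 U3] by simp
        also have "\<dots> = 0" using D3[OF i' j' ij'] .
        finally show ?thesis .
      qed
    qed
  qed
  show ?case using U UU off unfolding N_def by blast
qed


definition ip :: "complex vec \<Rightarrow> complex vec \<Rightarrow> complex" where
  "ip x y = (\<Sum>i<dim_vec x. cnj (x $ i) * y $ i)"

lemma ip_adj:
  assumes B: "B \<in> carrier_mat a b" and x: "x \<in> carrier_vec a" and y: "y \<in> carrier_vec b"
  shows "ip x (B *\<^sub>v y) = ip (mat_adjoint B *\<^sub>v x) y"
proof -
  have "ip x (B *\<^sub>v y) = (\<Sum>i<a. cnj (x $ i) * (\<Sum>j<b. B $$ (i,j) * y $ j))"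
    unfolding ip_def using x by (intro sum.cong, auto simp: multv_entry[OF B y])
  also have "\<dots> = (\<Sum>i<a. \<Sum>j<b. cnj (x $ i) * B $$ (i,j) * y $ j)"
    by (simp add: sum_distrib_left ac_simps)
  also have "\<dots> = (\<Sum>j<b. \<Sum>i<a. cnj (x $ i) * B $$ (i,j) * y $ j)"
    by (rule sum.swap)
  also have "\<dots> = (\<Sum>j<b. cnj ((mat_adjoint B *\<^sub>v x) $ j) * y $ j)"
  proof (rule sum.cong[OF refl])
    fix j assume "j \<in> {..<b}" then have j: "j < b" by simp
    have "(mat_adjoint B *\<^sub>v x) $ j = (\<Sum>i<a. cnj (B $$ (i,j)) * x $ i)"
      using multv_entry[OF adj_carrier[OF B] x j] B j by simp
    then show "(\<Sum>i<a. cnj (x $ i) * B $$ (i,j) * y $ j) = cnj ((mat_adjoint B *\<^sub>v x) $ j) * y $ j"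
      by (simp add: sum_distrib_left sum_distrib_right ac_simps)
  qed
  also have "\<dots> = ip (mat_adjoint B *\<^sub>v x) y"
    unfolding ip_def using B by simp
  finally show ?thesis .
qed

lemma ip_self: "ip x x = of_real (\<Sum>i<dim_vec x. (cmod (x $ i))^2)"
  unfolding ip_def of_real_sum
proof (rule sum.cong[OF refl])
  fix i
  have "of_real ((cmod (x $ i))^2) = x $ i * cnj (x $ i)" by (rule complex_norm_square)
  then show "cnj (x $ i) * x $ i = of_real ((cmod (x $ i))^2)" by (simp only: mult.commute)
qed

lemma herm_MMH: "M \<in> carrier_mat n p \<Longrightarrow> mat_adjoint (M * mat_adjoint M) = M * mat_adjoint (M::complex mat)"
  by (simp add: adj_mult[of _ n p _ n])

lemma proots_linear_prod: "proots (\<Prod>a\<leftarrow>as. [:- a, 1::complex:]) = mset as"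
proof (induction as)
  case (Cons a as)
  let ?P = "\<Prod>a\<leftarrow>as. [:- a, 1::complex:]"
  have nz: "?P \<noteq> 0"
    by (subst prod_list_zero_iff) auto
  have "proots ([:- a, 1:] * ?P) = proots [:- a, 1:] + proots ?P"
    by (rule proots_mult, simp, rule nz)
  then show ?case using Cons by simp
qed simp


lemma sq_decomp:
  fixes M :: "complex mat"
  assumes M: "M \<in> carrier_mat n p"
  shows "\<exists>U d. U \<in> carrier_mat n n \<and>
     sq_singvals M = mset (map (\<lambda>k. complex_of_real (d k)) [0..<n]) \<and>
     (\<forall>v\<in>carrier_vec n. (\<Sum>k<p. (cmod ((mat_adjoint M *\<^sub>v v) $ k))^2) =
                         (\<Sum>k<n. d k * (cmod (ip (col U k) v))^2)) \<and>
     (\<forall>v\<in>carrier_vec n. (\<Sum>i<n. (cmod (v $ i))^2) = (\<Sum>k<n. (cmod (ip (col U k) v))^2))"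
proof -
  define H where "H = M * mat_adjoint M"
  have H: "H \<in> carrier_mat n n" unfolding H_def using M by auto
  have hH: "mat_adjoint H = H" unfolding H_def by (rule herm_MMH[OF M])
  obtain U where U: "U \<in> carrier_mat n n" and UU: "mat_adjoint U * U = 1\<^sub>m n"
    and off: "\<And>i j. i<n \<Longrightarrow> j<n \<Longrightarrow> i \<noteq> j \<Longrightarrow> (mat_adjoint U * H * U) $$ (i,j) = 0"
    using herm_diag_ex[OF H hH] by blast
  have aU: "mat_adjoint U \<in> carrier_mat n n" using U by simp
  have UU': "U * mat_adjoint U = 1\<^sub>m n" by (rule mat_mult_left_right_inverse[OF aU U UU])
  define D where "D = mat_adjoint U * H * U"
  have D: "D \<in> carrier_mat n n" unfolding D_def using U H by auto
  have hD: "mat_adjoint D = D"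
  proof -
    have "mat_adjoint D = mat_adjoint U * mat_adjoint (mat_adjoint U * H)"
      unfolding D_def by (rule adj_mult[of _ n n _ n], insert U H, auto)
    also have "mat_adjoint (mat_adjoint U * H) = mat_adjoint H * U"
      by (subst adj_mult[of _ n n _ n], insert U H, auto)
    finally show ?thesis unfolding hH D_def using U H aU
      by (simp add: assoc_mult_mat[OF aU H U])
  qed
  define d where "d k = Re (D $$ (k,k))" for k
  have Dkk: "\<And>k. k < n \<Longrightarrow> D $$ (k,k) = of_real (d k)"
  proof -
    fix k assume k: "k < n"
    have "cnj (D $$ (k,k)) = mat_adjoint D $$ (k,k)" using D k by simp
    then have "cnj (D $$ (k,k)) = D $$ (k,k)" unfolding hD .
    then have "Im (cnj (D $$ (k,k))) = Im (D $$ (k,k))" by simp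
    then have "Im (D $$ (k,k)) = 0" by simp
    then show "D $$ (k,k) = of_real (d k)" unfolding d_def by (simp add: complex_eq_iff)
  qed
  have Doff: "\<And>i j. i<n \<Longrightarrow> j<n \<Longrightarrow> i \<noteq> j \<Longrightarrow> D $$ (i,j) = 0" unfolding D_def by (rule off)
  have HUDU: "H = U * D * mat_adjoint U"
  proof -
    have HU: "H * U \<in> carrier_mat n n" using H U by simp
    have "U * D = U * (mat_adjoint U * (H * U))" unfolding D_def using assoc_mult_mat[OF aU H U] by simp
    also have "\<dots> = (U * mat_adjoint U) * (H * U)" using assoc_mult_mat[OF U aU HU] by simp
    also have "\<dots> = H * U" unfolding UU' by (rule left_mult_one_mat[OF HU])
    finally have "U * D * mat_adjoint U = H * U * mat_adjoint U" by simp
    also have "\<dots> = H * (U * mat_adjoint U)" using assoc_mult_mat[OF H U aU] .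
    also have "\<dots> = H" unfolding UU' using H by simp
    finally show ?thesis by simp
  qed
  have sim: "similar_mat H D"
    unfolding similar_mat_def similar_mat_wit_def
    by (rule exI[of _ U], rule exI[of _ "mat_adjoint U"], insert H D U aU UU UU' HUDU, auto simp: Let_def)
  have ut: "upper_triangular D" using Doff D unfolding upper_triangular_def by auto
  have cp: "char_poly H = (\<Prod>a\<leftarrow>diag_mat D. [:- a, 1:])"
    unfolding char_poly_similar[OF sim] by (rule char_poly_upper_triangular[OF D ut])
  have dm: "diag_mat D = map (\<lambda>k. complex_of_real (d k)) [0..<n]"
    unfolding diag_mat_def using D Dkk by (intro nth_equalityI, auto)
  have sv: "sq_singvals M = mset (map (\<lambda>k. complex_of_real (d k)) [0..<n])"
  proof -
    have "sq_singvals M = proots (char_poly H)" unfolding sq_singvals_def H_def ..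
    also have "\<dots> = mset (diag_mat D)" unfolding cp by (rule proots_linear_prod)
    finally show ?thesis unfolding dm .
  qed

  have aUv: "\<And>v. v \<in> carrier_vec n \<Longrightarrow> mat_adjoint U *\<^sub>v v \<in> carrier_vec n"
    using aU by (metis carrier_matD(1) carrier_vec_dim_vec dim_mult_mat_vec)
  have akk: "\<And>v k. v \<in> carrier_vec n \<Longrightarrow> k < n \<Longrightarrow> (mat_adjoint U *\<^sub>v v) $ k = ip (col U k) v"
  proof -
    fix v :: "complex vec" and k assume v: "v \<in> carrier_vec n" and k: "k < n"
    have "(mat_adjoint U *\<^sub>v v) $ k = (\<Sum>i<n. mat_adjoint U $$ (k,i) * v $ i)"
      by (rule multv_entry[OF aU v k])
    also have "\<dots> = (\<Sum>i<n. cnj (col U k $ i) * v $ i)"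
      by (rule sum.cong, insert U k, auto)
    also have "\<dots> = ip (col U k) v" unfolding ip_def using U by simp
    finally show "(mat_adjoint U *\<^sub>v v) $ k = ip (col U k) v" .
  qed
  show ?thesis
  proof (rule exI[of _ U], rule exI[of _ d], intro conjI ballI)
    show "U \<in> carrier_mat n n" by (rule U)
    show "sq_singvals M = mset (map (\<lambda>k. complex_of_real (d k)) [0..<n])" by (rule sv)
  next
    fix v :: "complex vec" assume v: "v \<in> carrier_vec n"
    define a where "a = mat_adjoint U *\<^sub>v v"
    have a: "a \<in> carrier_vec n" unfolding a_def by (rule aUv[OF v])
    have ak: "\<And>k. k < n \<Longrightarrow> a $ k = ip (col U k) v" unfolding a_def using v by (rule akk)
    have ipa: "\<And>k. k < n \<Longrightarrow> cnj (a $ k) * a $ k = of_real ((cmod (ip (col U k) v))^2)"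
      unfolding complex_norm_square using ak by (simp only: mult.commute)
    have w: "mat_adjoint M *\<^sub>v v \<in> carrier_vec p" using adj_carrier[OF M] by (metis carrier_matD(1) carrier_vec_dim_vec dim_mult_mat_vec)
    have Da: "D *\<^sub>v a \<in> carrier_vec n" using D by (metis carrier_matD(1) carrier_vec_dim_vec dim_mult_mat_vec)
    have "of_real (\<Sum>k<p. (cmod ((mat_adjoint M *\<^sub>v v) $ k))^2) = ip (mat_adjoint M *\<^sub>v v) (mat_adjoint M *\<^sub>v v)"
      using ip_self[of "mat_adjoint M *\<^sub>v v"] w by (simp only: carrier_vecD)
    also have "\<dots> = ip v (M *\<^sub>v (mat_adjoint M *\<^sub>v v))"
      using ip_adj[OF M v w] by simp
    also have "M *\<^sub>v (mat_adjoint M *\<^sub>v v) = H *\<^sub>v v"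
      unfolding H_def using assoc_mult_mat_vec[OF M adj_carrier[OF M] v] by simp
    also have "H *\<^sub>v v = U *\<^sub>v (D *\<^sub>v a)"
    proof -
      have UD: "U * D \<in> carrier_mat n n" using U D by simp
      have "H *\<^sub>v v = (U * D) *\<^sub>v a" unfolding a_def HUDU by (rule assoc_mult_mat_vec[OF UD aU v])
      also have "\<dots> = U *\<^sub>v (D *\<^sub>v a)" by (rule assoc_mult_mat_vec[OF U D a])
      finally show ?thesis .
    qed
    also have "ip v (U *\<^sub>v (D *\<^sub>v a)) = ip a (D *\<^sub>v a)"
      unfolding a_def using ip_adj[OF U v Da] by (simp add: a_def)
    also have "\<dots> = (\<Sum>k<n. cnj (a $ k) * (D *\<^sub>v a) $ k)" unfolding ip_def using a by simp
    also have "\<dots> = (\<Sum>k<n. of_real (d k * (cmod (ip (col U k) v))^2))"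
    proof (rule sum.cong[OF refl])
      fix k assume "k \<in> {..<n}" then have k: "k < n" by simp
      have "(D *\<^sub>v a) $ k = (\<Sum>l<n. D $$ (k,l) * a $ l)" by (rule multv_entry[OF D a k])
      also have "\<dots> = (\<Sum>l<n. if l = k then D $$ (k,k) * a $ k else 0)"
        by (rule sum.cong, insert k Doff, auto)
      also have "\<dots> = D $$ (k,k) * a $ k" using k by simp
      finally have "cnj (a $ k) * (D *\<^sub>v a) $ k = of_real (d k) * (cnj (a $ k) * a $ k)"
        using Dkk[OF k] by (simp add: ac_simps)
      also have "\<dots> = of_real (d k) * of_real ((cmod (ip (col U k) v))^2)" using ipa[OF k] by simp
      also have "\<dots> = of_real (d k * (cmod (ip (col U k) v))^2)" by (simp only: of_real_mult)
      finally show "cnj (a $ k) * (D *\<^sub>v a) $ k = of_real (d k * (cmod (ip (col U k) v))^2)" .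
    qed
    also have "\<dots> = of_real (\<Sum>k<n. d k * (cmod (ip (col U k) v))^2)" by (rule of_real_sum[symmetric])
    finally show "(\<Sum>k<p. (cmod ((mat_adjoint M *\<^sub>v v) $ k))^2) = (\<Sum>k<n. d k * (cmod (ip (col U k) v))^2)"
      using of_real_eq_iff by blast
  next
    fix v :: "complex vec" assume v: "v \<in> carrier_vec n"
    define a where "a = mat_adjoint U *\<^sub>v v"
    have a: "a \<in> carrier_vec n" unfolding a_def by (rule aUv[OF v])
    have ak: "\<And>k. k < n \<Longrightarrow> a $ k = ip (col U k) v" unfolding a_def using v by (rule akk)
    have "of_real (\<Sum>i<n. (cmod (v $ i))^2) = ip v v" using ip_self[of v] v by (simp only: carrier_vecD)
    also have "\<dots> = ip v ((U * mat_adjoint U) *\<^sub>v v)" unfolding UU' using v by simp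
    also have "(U * mat_adjoint U) *\<^sub>v v = U *\<^sub>v a" unfolding a_def by (rule assoc_mult_mat_vec[OF U aU v])
    also have "ip v (U *\<^sub>v a) = ip a a" unfolding a_def using ip_adj[OF U v aUv[OF v]] by simp
    also have "\<dots> = of_real (\<Sum>k<n. (cmod (a $ k))^2)" using ip_self[of a] a by (simp only: carrier_vecD)
    also have "(\<Sum>k<n. (cmod (a $ k))^2) = (\<Sum>k<n. (cmod (ip (col U k) v))^2)"
      by (rule sum.cong, auto simp: ak)
    finally show "(\<Sum>i<n. (cmod (v $ i))^2) = (\<Sum>k<n. (cmod (ip (col U k) v))^2)"
      using of_real_eq_iff by blast
  qed
qed


lemma kernel_ex:
  fixes cs :: "complex vec list"
  assumes len: "length cs < n" and cs: "set cs \<subseteq> carrier_vec n"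
  shows "\<exists>v\<in>carrier_vec n. v \<noteq> 0\<^sub>v n \<and> (\<forall>c\<in>set cs. ip c v = 0)"
proof -
  define k where "k = length cs"
  define c where "c i = (if i < k then conjugate (cs!i) else 0\<^sub>v n)" for i
  have cc: "c \<in> {0..<n} \<rightarrow> carrier_vec n" using cs unfolding c_def k_def by (auto intro!: carrier_vec_conjugate nth_mem[THEN subsetD[OF cs]])
  define A where "A = mat\<^sub>r n n (\<lambda>i. if i = k then 0\<^sub>v n else c i)"
  have A: "A \<in> carrier_mat n n" unfolding A_def by simp
  have "det A = 0" unfolding A_def by (rule det_row_0[OF _ cc], insert len, simp add: k_def)
  then obtain v where v: "v \<in> carrier_vec n" and v0: "v \<noteq> 0\<^sub>v n" and Av: "A *\<^sub>v v = 0\<^sub>v n"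
    using det_0_iff_vec_prod_zero[OF A] by blast
  have "\<forall>c\<in>set cs. ip c v = 0"
  proof
    fix b assume "b \<in> set cs"
    then obtain i where i: "i < k" and bi: "b = cs!i" unfolding k_def by (auto simp: in_set_conv_nth)
    have b: "b \<in> carrier_vec n" using cs \<open>b \<in> set cs\<close> by auto
    have ik: "i \<noteq> k" "i < n" using i len k_def by auto
    have "0 = (A *\<^sub>v v) $ i" using Av ik by simp
    also have "\<dots> = row A i \<bullet> v" using A ik by simp
    also have "row A i = conjugate b" unfolding A_def c_def using ik i bi b cc
      by (simp add: row_mat_of_row_fun)
    also have "conjugate b \<bullet> v = ip b v" unfolding ip_def scalar_prod_def using b v
      by (simp add: atLeast0LessThan)
    finally show "ip b v = 0" by simp
  qed
  then show ?thesis using v v0 by blast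
qed


lemma size_filter_cnt:
  "size (filter_mset P (mset (map (\<lambda>k. complex_of_real (d k)) [0..<n]))) = card {k. k < n \<and> P (complex_of_real (d k))}"
proof -
  have "size (filter_mset P (mset (map (\<lambda>k. complex_of_real (d k)) [0..<n]))) =
        length (filter P (map (\<lambda>k. complex_of_real (d k)) [0..<n]))"
    by (simp only: mset_filter[symmetric] size_mset)
  also have "\<dots> = card {i. i < n \<and> P (complex_of_real (d i))}"
    by (subst length_filter_conv_card, intro arg_cong[where f=card] Collect_cong, auto)
  finally show ?thesis .
qed

lemma normsq_pos:
  fixes v :: "complex vec"
  assumes v: "v \<in> carrier_vec n" and v0: "v \<noteq> 0\<^sub>v n"
  shows "(\<Sum>i<n. (cmod (v $ i))^2) > 0"
proof -
  obtain i where i: "i < n" and vi: "v $ i \<noteq> 0"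
    using v v0 by (metis carrier_vecD eq_vecI index_zero_vec(1) index_zero_vec(2))
  show ?thesis by (rule sum_pos2[of _ i], insert i vi, auto)
qed

lemma count_le:
  fixes M1 M2 :: "complex mat" and bs :: "complex vec list"
  assumes M1: "M1 \<in> carrier_mat n p" and M2: "M2 \<in> carrier_mat n p"
   and bs: "set bs \<subseteq> carrier_vec n"
   and hyp: "\<And>v. v \<in> carrier_vec n \<Longrightarrow> (\<forall>b\<in>set bs. ip b v = 0) \<Longrightarrow> mat_adjoint M1 *\<^sub>v v = mat_adjoint M2 *\<^sub>v v"
  shows "size (filter_mset (\<lambda>l. Re l \<le> x) (sq_singvals M1)) \<le> size (filter_mset (\<lambda>l. Re l \<le> x) (sq_singvals M2)) + length bs"
proof -
  obtain U1 d1 where U1: "U1 \<in> carrier_mat n n"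
    and sv1: "sq_singvals M1 = mset (map (\<lambda>k. complex_of_real (d1 k)) [0..<n])"
    and Q1: "\<And>v. v\<in>carrier_vec n \<Longrightarrow> (\<Sum>k<p. (cmod ((mat_adjoint M1 *\<^sub>v v) $ k))^2) = (\<Sum>k<n. d1 k * (cmod (ip (col U1 k) v))^2)"
    and P1: "\<And>v. v\<in>carrier_vec n \<Longrightarrow> (\<Sum>i<n. (cmod (v $ i))^2) = (\<Sum>k<n. (cmod (ip (col U1 k) v))^2)"
    using sq_decomp[OF M1] by blast
  obtain U2 d2 where U2: "U2 \<in> carrier_mat n n"
    and sv2: "sq_singvals M2 = mset (map (\<lambda>k. complex_of_real (d2 k)) [0..<n])"
    and Q2: "\<And>v. v\<in>carrier_vec n \<Longrightarrow> (\<Sum>k<p. (cmod ((mat_adjoint M2 *\<^sub>v v) $ k))^2) = (\<Sum>k<n. d2 k * (cmod (ip (col U2 k) v))^2)"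
    and P2: "\<And>v. v\<in>carrier_vec n \<Longrightarrow> (\<Sum>i<n. (cmod (v $ i))^2) = (\<Sum>k<n. (cmod (ip (col U2 k) v))^2)"
    using sq_decomp[OF M2] by blast
  define T1 where "T1 = {k. k < n \<and> d1 k \<le> x}"
  define S1 where "S1 = {k. k < n \<and> \<not> d1 k \<le> x}"
  define T2 where "T2 = {k. k < n \<and> d2 k \<le> x}"
  have c1: "size (filter_mset (\<lambda>l. Re l \<le> x) (sq_singvals M1)) = card T1"
    unfolding sv1 size_filter_cnt T1_def by simp
  have c2: "size (filter_mset (\<lambda>l. Re l \<le> x) (sq_singvals M2)) = card T2"
    unfolding sv2 size_filter_cnt T2_def by simp
  have fin: "finite T1" "finite S1" "finite T2" unfolding T1_def S1_def T2_def by auto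
  have cardS1: "card S1 + card T1 = n"
  proof -
    have "S1 \<union> T1 = {..<n}" "S1 \<inter> T1 = {}" unfolding S1_def T1_def by auto
    then show ?thesis using card_Un_disjoint[OF fin(2) fin(1)] by simp
  qed
  show ?thesis
  proof (rule ccontr)
    assume "\<not> ?thesis"
    then have lt: "card T1 > card T2 + length bs" unfolding c1 c2 by simp
    define cs where "cs = bs @ map (col U1) (sorted_list_of_set S1) @ map (col U2) (sorted_list_of_set T2)"
    have lcs: "length cs < n" unfolding cs_def using lt cardS1 fin by simp
    have ccs: "set cs \<subseteq> carrier_vec n"
      unfolding cs_def using bs U1 U2 fin unfolding S1_def T2_def by (auto intro!: col_dim)
    obtain v where v: "v \<in> carrier_vec n" and v0: "v \<noteq> 0\<^sub>v n" and orth: "\<forall>c\<in>set cs. ip c v = 0"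
      using kernel_ex[OF lcs ccs] by blast
    have a1: "\<And>k. k \<in> S1 \<Longrightarrow> ip (col U1 k) v = 0" using orth fin unfolding cs_def by auto
    have a2: "\<And>k. k \<in> T2 \<Longrightarrow> ip (col U2 k) v = 0" using orth fin unfolding cs_def by auto
    have eqM: "mat_adjoint M1 *\<^sub>v v = mat_adjoint M2 *\<^sub>v v"
      by (rule hyp[OF v], insert orth, auto simp: cs_def)
    define nv where "nv = (\<Sum>i<n. (cmod (v $ i))^2)"
    have nvpos: "nv > 0" unfolding nv_def by (rule normsq_pos[OF v v0])
    define Q where "Q = (\<Sum>k<p. (cmod ((mat_adjoint M1 *\<^sub>v v) $ k))^2)"
    have "Q = (\<Sum>k<n. d1 k * (cmod (ip (col U1 k) v))^2)" unfolding Q_def by (rule Q1[OF v])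
    also have "\<dots> \<le> (\<Sum>k<n. x * (cmod (ip (col U1 k) v))^2)"
    proof (rule sum_mono)
      fix k assume k: "k \<in> {..<n}"
      show "d1 k * (cmod (ip (col U1 k) v))^2 \<le> x * (cmod (ip (col U1 k) v))^2"
      proof (cases "d1 k \<le> x")
        case True then show ?thesis by (intro mult_right_mono, auto)
      next
        case False then have "k \<in> S1" using k unfolding S1_def by auto
        then show ?thesis using a1 by simp
      qed
    qed
    also have "\<dots> = x * nv" unfolding nv_def P1[OF v] by (simp add: sum_distrib_left)
    finally have le: "Q \<le> x * nv" .
    have "Q = (\<Sum>k<n. d2 k * (cmod (ip (col U2 k) v))^2)" unfolding Q_def eqM by (rule Q2[OF v])
    moreover have "(\<Sum>k<n. d2 k * (cmod (ip (col U2 k) v))^2) - x * nv > 0"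
    proof -
      have "(\<Sum>k<n. d2 k * (cmod (ip (col U2 k) v))^2) - x * nv =
            (\<Sum>k<n. (d2 k - x) * (cmod (ip (col U2 k) v))^2)"
        unfolding nv_def P2[OF v] by (simp add: sum_distrib_left sum_subtractf left_diff_distrib)
      also have "\<dots> > 0"
      proof -
        have "(\<Sum>k<n. (cmod (ip (col U2 k) v))^2) > 0" using nvpos unfolding nv_def P2[OF v] .
        have "\<exists>k<n. (cmod (ip (col U2 k) v))^2 > 0"
        proof (rule ccontr)
          assume "\<not> (\<exists>k<n. (cmod (ip (col U2 k) v))^2 > 0)"
          then have "\<And>k. k \<in> {..<n} \<Longrightarrow> (cmod (ip (col U2 k) v))^2 = 0"
            by (metis lessThan_iff not_less zero_le_power2 order.antisym)
          then have "(\<Sum>k<n. (cmod (ip (col U2 k) v))^2) = 0" by simp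
          then show False using \<open>(\<Sum>k<n. (cmod (ip (col U2 k) v))^2) > 0\<close> by simp
        qed
        then obtain k where k: "k < n" and nz: "(cmod (ip (col U2 k) v))^2 > 0" by blast
        then have "k \<notin> T2" using a2 by auto
        then have dk: "d2 k > x" using k unfolding T2_def by auto
        show ?thesis
        proof (rule sum_pos2[of _ k])
          show "0 < (d2 k - x) * (cmod (ip (col U2 k) v))^2" using dk nz by simp
          fix i assume i: "i \<in> {..<n}"
          show "0 \<le> (d2 i - x) * (cmod (ip (col U2 i) v))^2"
          proof (cases "d2 i \<le> x")
            case True then have "i \<in> T2" using i unfolding T2_def by auto
            then show ?thesis using a2 by simp
          qed simp
        qed (insert k, auto)
      qed
      finally show ?thesis .
    qed
    ultimately show False using le by simp
  qed
qed


lemma rank_basis: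
  fixes D :: "complex mat"
  assumes D: "D \<in> carrier_mat n p"
  shows "\<exists>bs. set bs \<subseteq> carrier_vec n \<and> length bs \<le> mrank D \<and>
     (\<forall>v\<in>carrier_vec n. (\<forall>b\<in>set bs. ip b v = 0) \<longrightarrow> mat_adjoint D *\<^sub>v v = 0\<^sub>v p)"
proof -
  interpret vec_space "TYPE(complex)" n .
  obtain S where max: "maximal S (\<lambda>T. T \<subseteq> set (cols D) \<and> lin_indpt T)"
    using maximal_exists[of "(\<lambda>T. T \<subseteq> set (cols D) \<and> lin_indpt T)" "card (set (cols D))" "{}"]
    by (meson List.finite_set card_mono empty_iff empty_subsetI finite_lin_indpt2 rev_finite_subset)
  have rk: "mrank D = card S" unfolding mrank_def using D rank_card_indpt[OF D max] by simp
  have SC: "S \<subseteq> set (cols D)" and li: "lin_indpt S" using max unfolding maximal_def by auto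
  have finS: "finite S" using SC by (rule finite_subset, simp)
  have Sc: "S \<subseteq> carrier_vec n" using SC D by (auto simp: cols_def)
  obtain bs where bs: "set bs = S" and dbs: "distinct bs" using finite_distinct_list[OF finS] by blast
  show ?thesis
  proof (rule exI[of _ bs], intro conjI ballI impI)
    show "set bs \<subseteq> carrier_vec n" using bs Sc by simp
    show "length bs \<le> mrank D" using rk bs dbs distinct_card by fastforce
    fix v :: "complex vec" assume v: "v \<in> carrier_vec n" and orth: "\<forall>b\<in>set bs. ip b v = 0"
    have colz: "\<And>c. c \<in> set (cols D) \<Longrightarrow> ip c v = 0"
    proof -
      fix c assume cD: "c \<in> set (cols D)"
      have c: "c \<in> carrier_vec n" using cD D by (auto simp: cols_def)
      show "ip c v = 0"
      proof (cases "c \<in> S")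
        case True then show ?thesis using orth bs by auto
      next
        case False
        have "\<not> lin_indpt (S \<union> {c})"
        proof
          assume "lin_indpt (S \<union> {c})"
          then have "S \<union> {c} = S" using max cD SC unfolding maximal_def by blast
          then show False using False by auto
        qed
        then have "c \<in> span S" using lin_dep_iff_in_span[OF _ li _ False] Sc c by simp
        then obtain a where "lincomb a S = c" using finite_in_span[OF finS] Sc by auto
        then have ci: "\<And>i. i < n \<Longrightarrow> c $ i = (\<Sum>x\<in>S. a x * x $ i)"
          using lincomb_index Sc by blast
        have "ip c v = (\<Sum>i<n. cnj (\<Sum>x\<in>S. a x * x $ i) * v $ i)"
          unfolding ip_def using c by (intro sum.cong, auto simp: ci)
        also have "\<dots> = (\<Sum>x\<in>S. cnj (a x) * (\<Sum>i<n. cnj (x $ i) * v $ i))"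
          by (simp add: sum_distrib_left sum_distrib_right ac_simps sum.swap[of _ S])
        also have "\<dots> = (\<Sum>x\<in>S. cnj (a x) * ip x v)"
          by (rule sum.cong, insert Sc, auto simp: ip_def)
        also have "\<dots> = 0" using orth bs by simp
        finally show ?thesis .
      qed
    qed
    show "mat_adjoint D *\<^sub>v v = 0\<^sub>v p"
    proof (rule eq_vecI)
      fix k assume "k < dim_vec (0\<^sub>v p)"
      then have k: "k < p" by simp
      have "(mat_adjoint D *\<^sub>v v) $ k = (\<Sum>i<n. cnj (D $$ (i,k)) * v $ i)"
        using multv_entry[OF adj_carrier[OF D] v k] D k by simp
      also have "\<dots> = ip (col D k) v" unfolding ip_def using D k by simp
      also have "\<dots> = 0" using colz D k by (auto simp: cols_def)
      finally show "(mat_adjoint D *\<^sub>v v) $ k = 0\<^sub>v p $ k" using k by simp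
    qed (insert D, simp)
  qed
qed


lemma sorted_shift:
  fixes xs ys :: "real list"
  assumes sx: "sorted xs" and sy: "sorted ys" and lx: "length xs = n" and ly: "length ys = n"
    and hc: "\<And>t. length (filter (\<lambda>y. y \<le> t) ys) \<le> length (filter (\<lambda>x. x \<le> t) xs) + r"
    and i: "i + r < n"
  shows "xs ! i \<le> ys ! (i + r)"
proof (rule ccontr)
  assume "\<not> ?thesis"
  then have gt: "xs ! i > ys ! (i + r)" by simp
  define t where "t = ys ! (i + r)"
  have "{0..i+r} \<subseteq> {j. j < n \<and> ys ! j \<le> t}"
    unfolding t_def using sy ly i by (auto intro: sorted_nth_mono)
  then have c1: "i + r + 1 \<le> card {j. j < n \<and> ys ! j \<le> t}"
    using card_mono[of "{j. j < n \<and> ys ! j \<le> t}" "{0..i+r}"] by simp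
  have "{j. j < n \<and> xs ! j \<le> t} \<subseteq> {0..<i}"
  proof
    fix j assume j: "j \<in> {j. j < n \<and> xs ! j \<le> t}"
    show "j \<in> {0..<i}"
    proof (rule ccontr)
      assume "j \<notin> {0..<i}"
      then have "i \<le> j" by simp
      then have "xs ! i \<le> xs ! j" using sx lx j by (auto intro: sorted_nth_mono)
      then show False using j gt t_def by simp
    qed
  qed
  then have c2: "card {j. j < n \<and> xs ! j \<le> t} \<le> i"
    using card_mono[of "{0..<i}"] by fastforce
  have "length (filter (\<lambda>y. y \<le> t) ys) = card {j. j < n \<and> ys ! j \<le> t}"
    using ly by (simp add: length_filter_conv_card)
  moreover have "length (filter (\<lambda>x. x \<le> t) xs) = card {j. j < n \<and> xs ! j \<le> t}"
    using lx by (simp add: length_filter_conv_card)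
  ultimately show False using hc[of t] c1 c2 by simp
qed

lemma sum_split_add: fixes m r :: nat shows "(\<Sum>i<m+r. f i) = (\<Sum>i<m. f i) + (\<Sum>i<r. f (m+i))"
  by (induction r) (simp_all del: sum.lessThan_Suc_shift add: sum.lessThan_Suc ac_simps)

lemma mono_sum_le:
  fixes xs ys :: "real list" and g :: "real \<Rightarrow> real"
  assumes sx: "sorted xs" and sy: "sorted ys" and lx: "length xs = n" and ly: "length ys = n"
    and hc: "\<And>t. length (filter (\<lambda>y. y \<le> t) ys) \<le> length (filter (\<lambda>x. x \<le> t) xs) + r"
    and g: "mono g" and K: "\<And>x. \<bar>g x\<bar> \<le> K"
  shows "(\<Sum>i<n. g (xs ! i)) - (\<Sum>i<n. g (ys ! i)) \<le> 2 * real r * K"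
proof (cases "r < n")
  case False
  have "(\<Sum>i<n. g (xs ! i)) \<le> (\<Sum>i<n. K)" by (rule sum_mono, metis K abs_le_iff minus_le_iff)
  moreover have "(\<Sum>i<n. - K) \<le> (\<Sum>i<n. g (ys ! i))" by (rule sum_mono, metis K abs_le_iff minus_le_iff)
  moreover have "K \<ge> 0" using K[of 0] by simp
  moreover have "real n \<le> real r" using False by simp
  ultimately have "(\<Sum>i<n. g (xs ! i)) - (\<Sum>i<n. g (ys ! i)) \<le> 2 * real n * K" by simp
  also have "\<dots> \<le> 2 * real r * K" using \<open>K \<ge> 0\<close> \<open>real n \<le> real r\<close> by (simp add: mult_right_mono)
  finally show ?thesis .
next
  case True
  define m where "m = n - r"
  have n: "n = m + r" using True m_def by simp
  have s1: "(\<Sum>i<n. g (xs ! i)) = (\<Sum>i<m. g (xs ! i)) + (\<Sum>i<r. g (xs ! (m + i)))"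
    unfolding n by (rule sum_split_add)
  have s2: "(\<Sum>i<n. g (ys ! i)) = (\<Sum>i<r. g (ys ! i)) + (\<Sum>i<m. g (ys ! (i + r)))"
    unfolding n using sum_split_add[of "\<lambda>i. g (ys ! i)" r m] by (simp add: add.commute)
  have "(\<Sum>i<m. g (xs ! i)) \<le> (\<Sum>i<m. g (ys ! (i + r)))"
  proof (rule sum_mono)
    fix i assume "i \<in> {..<m}"
    then have "i + r < n" using n by simp
    then show "g (xs ! i) \<le> g (ys ! (i + r))"
      using sorted_shift[OF sx sy lx ly hc] g by (simp add: monoD)
  qed
  moreover have "(\<Sum>i<r. g (xs ! (m + i))) \<le> (\<Sum>i<r. K)" by (rule sum_mono, metis K abs_le_iff minus_le_iff)
  moreover have "(\<Sum>i<r. - K) \<le> (\<Sum>i<r. g (ys ! i))" by (rule sum_mono, metis K abs_le_iff minus_le_iff)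
  ultimately show ?thesis unfolding s1 s2 by simp
qed


lemma mono_abs_diff:
  fixes xs ys :: "real list" and g :: "real \<Rightarrow> real"
  assumes sx: "sorted xs" and sy: "sorted ys" and lx: "length xs = n" and ly: "length ys = n"
    and h1: "\<And>t. length (filter (\<lambda>y. y \<le> t) ys) \<le> length (filter (\<lambda>x. x \<le> t) xs) + r"
    and h2: "\<And>t. length (filter (\<lambda>y. y \<le> t) xs) \<le> length (filter (\<lambda>x. x \<le> t) ys) + r"
    and g: "mono g \<or> mono (\<lambda>x. - g x)" and K: "\<And>x. \<bar>g x\<bar> \<le> K"
  shows "\<bar>(\<Sum>i<n. g (xs ! i)) - (\<Sum>i<n. g (ys ! i))\<bar> \<le> 2 * real r * K"
proof -
  have K': "\<And>x. \<bar>- g x\<bar> \<le> K" using K by simp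
  show ?thesis
  proof (cases "mono g")
    case True
    have "(\<Sum>i<n. g (xs ! i)) - (\<Sum>i<n. g (ys ! i)) \<le> 2 * real r * K"
      by (rule mono_sum_le[OF sx sy lx ly h1 True K])
    moreover have "(\<Sum>i<n. g (ys ! i)) - (\<Sum>i<n. g (xs ! i)) \<le> 2 * real r * K"
      by (rule mono_sum_le[OF sy sx ly lx h2 True K])
    ultimately show ?thesis by linarith
  next
    case False
    then have m: "mono (\<lambda>x. - g x)" using g by simp
    have "(\<Sum>i<n. - g (xs ! i)) - (\<Sum>i<n. - g (ys ! i)) \<le> 2 * real r * K"
      by (rule mono_sum_le[OF sx sy lx ly h1 m K'])
    moreover have "(\<Sum>i<n. - g (ys ! i)) - (\<Sum>i<n. - g (xs ! i)) \<le> 2 * real r * K"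
      by (rule mono_sum_le[OF sy sx ly lx h2 m K'])
    ultimately show ?thesis by (simp add: sum_negf)
  qed
qed

definition psi :: "real \<Rightarrow> real \<Rightarrow> real" where "psi v s = s / (s^2 + v^2)"
definition phi :: "real \<Rightarrow> real \<Rightarrow> real" where "phi v s = v / (s^2 + v^2)"

lemma psi_mono: assumes v: "v > 0" and ab: "a \<le> b" and p: "a * b \<le> v^2" shows "psi v a \<le> psi v b"
proof -
  have pa: "a^2 + v^2 > 0" and pb: "b^2 + v^2 > 0" using v by (auto intro: add_nonneg_pos)
  have "0 \<le> (b - a) * (v^2 - a * b)" using ab p by simp
  then have "a * (b^2 + v^2) \<le> b * (a^2 + v^2)" by (simp add: algebra_simps power2_eq_square)
  then show ?thesis unfolding psi_def using pa pb by (simp add: divide_simps)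
qed

lemma psi_anti: assumes v: "v > 0" and ab: "a \<le> b" and p: "v^2 \<le> a * b" shows "psi v b \<le> psi v a"
proof -
  have pa: "a^2 + v^2 > 0" and pb: "b^2 + v^2 > 0" using v by (auto intro: add_nonneg_pos)
  have "0 \<le> (b - a) * (a * b - v^2)" using ab p by simp
  then have "b * (a^2 + v^2) \<le> a * (b^2 + v^2)" by (simp add: algebra_simps power2_eq_square)
  then show ?thesis unfolding psi_def using pa pb by (simp add: divide_simps)
qed

lemma psi_bound: assumes v: "v > 0" shows "\<bar>psi v s\<bar> \<le> 1 / v"
proof -
  have p: "s^2 + v^2 > 0" using v by (auto intro: add_nonneg_pos)
  have "v * \<bar>s\<bar> \<le> s^2 + v^2"
  proof (cases "\<bar>s\<bar> \<le> v")
    case True then have "v * \<bar>s\<bar> \<le> v * v" using v by (simp add: mult_left_mono)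
    then show ?thesis by (simp add: power2_eq_square) (smt (verit) zero_le_square)
  next
    case False then have "v * \<bar>s\<bar> \<le> \<bar>s\<bar> * \<bar>s\<bar>" using v by (intro mult_right_mono) auto
    moreover have "\<bar>s\<bar> * \<bar>s\<bar> = s * s" by (simp add: abs_mult_self_eq)
    ultimately show ?thesis by (simp add: power2_eq_square) (smt (verit) zero_le_square)
  qed
  then show ?thesis unfolding psi_def using p v by (simp add: divide_simps abs_div mult.commute)
qed

lemma phi_bound: assumes v: "v > 0" shows "\<bar>phi v s\<bar> \<le> 1 / v"
proof -
  have p: "s^2 + v^2 > 0" using v by (auto intro: add_nonneg_pos)
  have "v * v \<le> s^2 + v^2" by (simp add: power2_eq_square)
  then show ?thesis unfolding phi_def using p v by (simp add: divide_simps)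
qed

lemma phi_le: assumes v: "v > 0" and "a^2 \<ge> b^2" shows "phi v a \<le> phi v b"
proof -
  have p1: "a^2 + v^2 > 0" and p2: "b^2 + v^2 > 0" using v by (auto intro: add_nonneg_pos)
  show ?thesis unfolding phi_def
    by (rule divide_left_mono, insert assms p1 p2, auto intro: mult_pos_pos)
qed


lemma stieltjes_lists:
  fixes xs ys :: "real list" and z :: complex
  assumes sx: "sorted xs" and sy: "sorted ys" and lx: "length xs = n" and ly: "length ys = n"
    and h1: "\<And>t. length (filter (\<lambda>y. y \<le> t) ys) \<le> length (filter (\<lambda>x. x \<le> t) xs) + r"
    and h2: "\<And>t. length (filter (\<lambda>y. y \<le> t) xs) \<le> length (filter (\<lambda>x. x \<le> t) ys) + r"
    and vpos: "Im z > 0"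
  shows "cmod ((\<Sum>i<n. 1 / (of_real (xs!i) - z)) - (\<Sum>i<n. 1 / (of_real (ys!i) - z))) \<le> 10 * real r / Im z"
proof -
  define u where "u = Re z"
  define v where "v = Im z"
  have v: "v > 0" using vpos v_def by simp
  note MD = mono_abs_diff[OF sx sy lx ly h1 h2]
  have dec: "\<And>l. 1 / (of_real l - z) = Complex (psi v (l - u)) (phi v (l - u))"
    by (simp add: complex_eq_iff psi_def phi_def Re_divide Im_divide power2_eq_square u_def v_def)
  define D where "D = (\<Sum>i<n. 1 / (of_real (xs!i) - z)) - (\<Sum>i<n. 1 / (of_real (ys!i) - z))"
  have ReD: "Re D = (\<Sum>i<n. psi v (xs!i - u)) - (\<Sum>i<n. psi v (ys!i - u))"
    unfolding D_def dec by (simp add: Re_sum)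
  have ImD: "Im D = (\<Sum>i<n. phi v (xs!i - u)) - (\<Sum>i<n. phi v (ys!i - u))"
    unfolding D_def dec by (simp add: Im_sum)
  define A where "A l = psi v (min (l - u) (- v))" for l
  define B where "B l = psi v (max (min (l - u) v) (- v))" for l
  define C where "C l = psi v (max (l - u) v)" for l
  have psi_split: "\<And>l. psi v (l - u) = A l + B l + C l"
  proof -
    fix l
    have neg: "psi v (- v) = - psi v v" unfolding psi_def by simp
    show "psi v (l - u) = A l + B l + C l"
      unfolding A_def B_def C_def using v neg
      by (cases "l - u \<le> - v"; cases "l - u \<le> v") (auto simp: min_def max_def)
  qed
  have phi0: "phi v 0 = 1 / v" unfolding phi_def using v by (simp add: power2_eq_square)
  define E where "E l = phi v (min (l - u) 0)" for l
  define F where "F l = phi v (max (l - u) 0)" for l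
  have phi_split: "\<And>l. phi v (l - u) = E l + F l - 1 / v"
  proof -
    fix l
    show "phi v (l - u) = E l + F l - 1 / v"
      unfolding E_def F_def using phi0 by (cases "l - u \<le> 0") (auto simp: min_def max_def)
  qed
  have bA: "\<bar>(\<Sum>i<n. A (xs!i)) - (\<Sum>i<n. A (ys!i))\<bar> \<le> 2 * real r * (1 / v)"
  proof (rule MD)
    show "\<And>x. \<bar>A x\<bar> \<le> 1 / v" unfolding A_def by (rule psi_bound[OF v])
    have "mono (\<lambda>x. - A x)"
    proof (rule monoI)
      fix x y :: real assume xy: "x \<le> y"
      have "v^2 \<le> min (x - u) (- v) * min (y - u) (- v)"
      proof -
        have "v * v \<le> (- min (x - u) (- v)) * (- min (y - u) (- v))"
          by (rule mult_mono, insert v, auto)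
        then show ?thesis by (simp add: power2_eq_square)
      qed
      then show "- A x \<le> - A y" unfolding A_def using psi_anti[OF v _] xy by simp
    qed
    then show "mono A \<or> mono (\<lambda>x. - A x)" by simp
  qed
  have bB: "\<bar>(\<Sum>i<n. B (xs!i)) - (\<Sum>i<n. B (ys!i))\<bar> \<le> 2 * real r * (1 / v)"
  proof (rule MD)
    show "\<And>x. \<bar>B x\<bar> \<le> 1 / v" unfolding B_def by (rule psi_bound[OF v])
    have "mono B"
    proof (rule monoI)
      fix x y :: real assume xy: "x \<le> y"
      define a where "a = max (min (x - u) v) (- v)"
      define b where "b = max (min (y - u) v) (- v)"
      have ab: "a \<le> b" unfolding a_def b_def using xy by auto
      have "\<bar>a\<bar> \<le> v" "\<bar>b\<bar> \<le> v" unfolding a_def b_def using v by auto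
      then have "\<bar>a\<bar> * \<bar>b\<bar> \<le> v * v" by (intro mult_mono, auto)
      then have "a * b \<le> v^2" by (simp add: power2_eq_square abs_mult[symmetric])
      then show "B x \<le> B y" unfolding B_def a_def[symmetric] b_def[symmetric] using psi_mono[OF v ab] by simp
    qed
    then show "mono B \<or> mono (\<lambda>x. - B x)" by simp
  qed
  have bC: "\<bar>(\<Sum>i<n. C (xs!i)) - (\<Sum>i<n. C (ys!i))\<bar> \<le> 2 * real r * (1 / v)"
  proof (rule MD)
    show "\<And>x. \<bar>C x\<bar> \<le> 1 / v" unfolding C_def by (rule psi_bound[OF v])
    have "mono (\<lambda>x. - C x)"
    proof (rule monoI)
      fix x y :: real assume xy: "x \<le> y"
      have "v^2 \<le> max (x - u) v * max (y - u) v"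
      proof -
        have "v * v \<le> max (x - u) v * max (y - u) v"
          by (rule mult_mono, insert v, auto)
        then show ?thesis by (simp add: power2_eq_square)
      qed
      then show "- C x \<le> - C y" unfolding C_def using psi_anti[OF v _] xy by simp
    qed
    then show "mono C \<or> mono (\<lambda>x. - C x)" by simp
  qed
  have bE: "\<bar>(\<Sum>i<n. E (xs!i)) - (\<Sum>i<n. E (ys!i))\<bar> \<le> 2 * real r * (1 / v)"
  proof (rule MD)
    show "\<And>x. \<bar>E x\<bar> \<le> 1 / v" unfolding E_def by (rule phi_bound[OF v])
    have "mono E"
    proof (rule monoI)
      fix x y :: real assume xy: "x \<le> y"
      have "(- min (y - u) 0)^2 \<le> (- min (x - u) 0)^2"
        by (rule power_mono, insert xy, auto)
      then have "(min (y - u) 0)^2 \<le> (min (x - u) 0)^2" by simp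
      then show "E x \<le> E y" unfolding E_def by (rule phi_le[OF v])
    qed
    then show "mono E \<or> mono (\<lambda>x. - E x)" by simp
  qed
  have bF: "\<bar>(\<Sum>i<n. F (xs!i)) - (\<Sum>i<n. F (ys!i))\<bar> \<le> 2 * real r * (1 / v)"
  proof (rule MD)
    show "\<And>x. \<bar>F x\<bar> \<le> 1 / v" unfolding F_def by (rule phi_bound[OF v])
    have "mono (\<lambda>x. - F x)"
    proof (rule monoI)
      fix x y :: real assume xy: "x \<le> y"
      have "(max (x - u) 0)^2 \<le> (max (y - u) 0)^2"
        by (rule power_mono, insert xy, auto)
      then show "- F x \<le> - F y" unfolding F_def using phi_le[OF v] by simp
    qed
    then show "mono F \<or> mono (\<lambda>x. - F x)" by simp
  qed
  have "Re D = ((\<Sum>i<n. A (xs!i)) - (\<Sum>i<n. A (ys!i))) + ((\<Sum>i<n. B (xs!i)) - (\<Sum>i<n. B (ys!i)))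
             + ((\<Sum>i<n. C (xs!i)) - (\<Sum>i<n. C (ys!i)))"
    unfolding ReD psi_split by (simp add: sum.distrib)
  then have "\<bar>Re D\<bar> \<le> 6 * real r / v" using bA bB bC by simp
  moreover have "Im D = ((\<Sum>i<n. E (xs!i)) - (\<Sum>i<n. E (ys!i))) + ((\<Sum>i<n. F (xs!i)) - (\<Sum>i<n. F (ys!i)))"
    unfolding ImD phi_split by (simp add: sum.distrib sum_subtractf)
  then have "\<bar>Im D\<bar> \<le> 4 * real r / v" using bE bF by simp
  ultimately have "cmod D \<le> 10 * real r / v" using cmod_le[of D] by simp
  then show ?thesis unfolding D_def v_def .
qed


lemma adj_minus: assumes "A \<in> carrier_mat n p" "B \<in> carrier_mat n p"
  shows "mat_adjoint (A - B) = mat_adjoint A - mat_adjoint (B::complex mat)"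
  by (rule eq_matI, insert assms, auto)

lemma sq_sorted:
  fixes M :: "complex mat"
  assumes M: "M \<in> carrier_mat n p"
  shows "\<exists>xs. sorted xs \<and> length xs = n \<and> sq_singvals M = mset (map complex_of_real xs)"
proof -
  obtain U d where "sq_singvals M = mset (map (\<lambda>k. complex_of_real (d k)) [0..<n])"
    using sq_decomp[OF M] by blast
  moreover have "mset (map complex_of_real (sort (map d [0..<n]))) = mset (map (\<lambda>k. complex_of_real (d k)) [0..<n])"
    by (simp add: mset_map image_mset.compositionality comp_def)
  ultimately show ?thesis by (intro exI[of _ "sort (map d [0..<n])"]) auto
qed

lemma cnt_list: "size (filter_mset (\<lambda>l. Re l \<le> t) (mset (map complex_of_real xs))) = length (filter (\<lambda>y. y \<le> t) xs)"
  by (induction xs) auto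

lemma summ_list: "(\<Sum>\<^sub># (image_mset g (mset xs))) = sum_list (map g xs)"
  by (induction xs) auto

lemma stl_list: "(\<Sum>\<^sub># (image_mset (\<lambda>l. 1 / (l - z)) (mset (map complex_of_real xs)))) =
    (\<Sum>i<length xs. 1 / (complex_of_real (xs ! i) - z))"
  unfolding summ_list by (simp add: sum_list_sum_nth atLeast0LessThan)

lemma rank_diff_bounds:
  fixes M1 M2 :: "complex mat"
  assumes M1: "M1 \<in> carrier_mat n p" and M2: "M2 \<in> carrier_mat n p" and n: "n \<ge> 1"
  shows "\<bar>esd n M1 x - esd n M2 x\<bar> \<le> real (mrank (M1 - M2)) / real n"
    and "Im z > 0 \<Longrightarrow> cmod (stieltjes n M1 z - stieltjes n M2 z) \<le> 10 * real (mrank (M1 - M2)) / (real n * Im z)"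
proof -
  define r where "r = mrank (M1 - M2)"
  have Dc: "M1 - M2 \<in> carrier_mat n p" by (rule minus_carrier_mat[OF M2])
  obtain bs where bs: "set bs \<subseteq> carrier_vec n" and lbs: "length bs \<le> r"
    and orth: "\<And>v. v \<in> carrier_vec n \<Longrightarrow> (\<forall>b\<in>set bs. ip b v = 0) \<Longrightarrow> mat_adjoint (M1 - M2) *\<^sub>v v = 0\<^sub>v p"
    using rank_basis[OF Dc] unfolding r_def by blast
  have eqv: "\<And>v. v \<in> carrier_vec n \<Longrightarrow> (\<forall>b\<in>set bs. ip b v = 0) \<Longrightarrow> mat_adjoint M1 *\<^sub>v v = mat_adjoint M2 *\<^sub>v v"
  proof -
    fix v :: "complex vec" assume v: "v \<in> carrier_vec n" and o: "\<forall>b\<in>set bs. ip b v = 0"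
    have "0\<^sub>v p = mat_adjoint (M1 - M2) *\<^sub>v v" using orth[OF v o] by simp
    also have "\<dots> = mat_adjoint M1 *\<^sub>v v - mat_adjoint M2 *\<^sub>v v"
      unfolding adj_minus[OF M1 M2] using M1 M2 v by (simp add: minus_mult_distrib_mat_vec[of _ p n])
    finally have z: "0\<^sub>v p = mat_adjoint M1 *\<^sub>v v - mat_adjoint M2 *\<^sub>v v" .
    show "mat_adjoint M1 *\<^sub>v v = mat_adjoint M2 *\<^sub>v v"
    proof (rule eq_vecI)
      fix i assume "i < dim_vec (mat_adjoint M2 *\<^sub>v v)"
      then have i: "i < p" using M2 by simp
      have "0 = (mat_adjoint M1 *\<^sub>v v - mat_adjoint M2 *\<^sub>v v) $ i" using z i by (metis index_zero_vec(1))
      also have "\<dots> = (mat_adjoint M1 *\<^sub>v v) $ i - (mat_adjoint M2 *\<^sub>v v) $ i" using i M2 by simp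
      finally show "(mat_adjoint M1 *\<^sub>v v) $ i = (mat_adjoint M2 *\<^sub>v v) $ i" by simp
    qed (insert M1 M2, simp)
  qed
  have eqv2: "\<And>v. v \<in> carrier_vec n \<Longrightarrow> (\<forall>b\<in>set bs. ip b v = 0) \<Longrightarrow> mat_adjoint M2 *\<^sub>v v = mat_adjoint M1 *\<^sub>v v"
    using eqv by metis
  have cnt: "\<And>t. size (filter_mset (\<lambda>l. Re l \<le> t) (sq_singvals M1)) \<le> size (filter_mset (\<lambda>l. Re l \<le> t) (sq_singvals M2)) + r"
  proof -
    fix t show "?thesis t" using count_le[OF M1 M2 bs eqv, of t] lbs by linarith
  qed
  have cnt2: "\<And>t. size (filter_mset (\<lambda>l. Re l \<le> t) (sq_singvals M2)) \<le> size (filter_mset (\<lambda>l. Re l \<le> t) (sq_singvals M1)) + r"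
  proof -
    fix t show "?thesis t" using count_le[OF M2 M1 bs eqv2, of t] lbs by linarith
  qed
  have npos: "real n > 0" using n by simp
  show "\<bar>esd n M1 x - esd n M2 x\<bar> \<le> real (mrank (M1 - M2)) / real n"
  proof -
    have "esd n M1 x - esd n M2 x = (real (size (filter_mset (\<lambda>l. Re l \<le> x) (sq_singvals M1))) - real (size (filter_mset (\<lambda>l. Re l \<le> x) (sq_singvals M2)))) / real n"
      unfolding esd_def by (simp add: diff_divide_distrib)
    moreover have "\<bar>real (size (filter_mset (\<lambda>l. Re l \<le> x) (sq_singvals M1))) - real (size (filter_mset (\<lambda>l. Re l \<le> x) (sq_singvals M2)))\<bar> \<le> real r"
      using cnt[of x] cnt2[of x] by linarith
    ultimately show ?thesis using npos unfolding r_def by (simp add: abs_div divide_right_mono)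
  qed
  assume vz: "Im z > 0"
  obtain xs where sx: "sorted xs" and lx: "length xs = n" and svx: "sq_singvals M1 = mset (map complex_of_real xs)"
    using sq_sorted[OF M1] by blast
  obtain ys where sy: "sorted ys" and ly: "length ys = n" and svy: "sq_singvals M2 = mset (map complex_of_real ys)"
    using sq_sorted[OF M2] by blast
  have h1: "\<And>t. length (filter (\<lambda>y. y \<le> t) ys) \<le> length (filter (\<lambda>x. x \<le> t) xs) + r"
    using cnt2 unfolding svx svy cnt_list .
  have h2: "\<And>t. length (filter (\<lambda>y. y \<le> t) xs) \<le> length (filter (\<lambda>x. x \<le> t) ys) + r"
    using cnt unfolding svx svy cnt_list .
  have main: "cmod ((\<Sum>i<n. 1 / (of_real (xs!i) - z)) - (\<Sum>i<n. 1 / (of_real (ys!i) - z))) \<le> 10 * real r / Im z"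
    by (rule stieltjes_lists[OF sx sy lx ly h1 h2 vz])
  have "stieltjes n M1 z - stieltjes n M2 z = ((\<Sum>i<n. 1 / (of_real (xs!i) - z)) - (\<Sum>i<n. 1 / (of_real (ys!i) - z))) / of_nat n"
    unfolding stieltjes_def svx svy stl_list lx ly by (simp add: diff_divide_distrib)
  then have "cmod (stieltjes n M1 z - stieltjes n M2 z) = cmod ((\<Sum>i<n. 1 / (of_real (xs!i) - z)) - (\<Sum>i<n. 1 / (of_real (ys!i) - z))) / real n"
    by (simp add: norm_divide)
  also have "\<dots> \<le> (10 * real r / Im z) / real n" using divide_right_mono[OF main] npos by simp
  also have "\<dots> = 10 * real r / (real n * Im z)" by simp
  finally show "cmod (stieltjes n M1 z - stieltjes n M2 z) \<le> 10 * real (mrank (M1 - M2)) / (real n * Im z)"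
    unfolding r_def by (simp add: field_simps)
qed


lemma rank_le_card_nz:
  fixes D :: "complex mat"
  assumes D: "D \<in> carrier_mat a b"
  shows "mrank D \<le> card {(j,k). j < a \<and> k < b \<and> D $$ (j,k) \<noteq> 0}"
proof -
  interpret vec_space "TYPE(complex)" a .
  obtain S where max: "maximal S (\<lambda>T. T \<subseteq> set (cols D) \<and> lin_indpt T)"
    using maximal_exists[of "(\<lambda>T. T \<subseteq> set (cols D) \<and> lin_indpt T)" "card (set (cols D))" "{}"]
    by (meson List.finite_set card_mono empty_iff empty_subsetI finite_lin_indpt2 rev_finite_subset)
  have rk: "mrank D = card S" unfolding mrank_def using D rank_card_indpt[OF D max] by simp
  have SC: "S \<subseteq> set (cols D)" and li: "lin_indpt S" using max unfolding maximal_def by auto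
  have Sc: "S \<subseteq> carrier_vec a" using SC D by (auto simp: cols_def)
  have z: "0\<^sub>v a \<notin> S"
  proof
    assume "0\<^sub>v a \<in> S"
    then have "lin_dep S" by (intro zero_lin_dep, auto simp: class_ring_simps)
    then show False using li by simp
  qed
  define Kset where "Kset = {k. k < b \<and> col D k \<noteq> 0\<^sub>v a}"
  define P where "P = {(j,k). j < a \<and> k < b \<and> D $$ (j,k) \<noteq> 0}"
  have finP: "finite P" unfolding P_def by (rule finite_subset[of _ "{..<a} \<times> {..<b}"], auto)
  have "S \<subseteq> col D ` Kset"
  proof
    fix x assume x: "x \<in> S"
    then have "x \<in> set (cols D)" using SC by auto
    then obtain k where k: "k < b" and xk: "x = col D k" using D by (auto simp: cols_def)
    have "col D k \<noteq> 0\<^sub>v a" using z x xk by auto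
    then show "x \<in> col D ` Kset" unfolding Kset_def using k xk by auto
  qed
  then have "card S \<le> card (col D ` Kset)" by (rule card_mono[rotated], simp add: Kset_def)
  also have "\<dots> \<le> card Kset" by (rule card_image_le, simp add: Kset_def)
  also have "Kset \<subseteq> snd ` P"
  proof
    fix k assume k: "k \<in> Kset"
    then have kb: "k < b" and nz: "col D k \<noteq> 0\<^sub>v a" unfolding Kset_def by auto
    obtain j where j: "j < a" and "col D k $ j \<noteq> 0"
      using nz D kb by (metis carrier_matD(1) col_dim dim_col eq_vecI index_zero_vec(1) index_zero_vec(2))
    then have "D $$ (j,k) \<noteq> 0" using D kb by simp
    then have "(j,k) \<in> P" unfolding P_def using j kb by auto
    then show "k \<in> snd ` P" by force
  qed
  then have "card Kset \<le> card (snd ` P)" by (rule card_mono[rotated], simp add: finP)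
  also have "\<dots> \<le> card P" by (rule card_image_le[OF finP])
  finally show ?thesis unfolding rk P_def .
qed


lemma card_pairs_real:
  fixes J K :: nat
  shows "real (card {(j,k). j < J \<and> k < K \<and> P j k}) = (\<Sum>j<J. \<Sum>k<K. if P j k then 1 else 0)"
proof -
  have eq: "{(j,k). j < J \<and> k < K \<and> P j k} = Sigma {..<J} (\<lambda>j. {k. k < K \<and> P j k})" by auto
  have "card {(j,k). j < J \<and> k < K \<and> P j k} = (\<Sum>j<J. card {k. k < K \<and> P j k})"
    unfolding eq by (rule card_SigmaI, auto)
  moreover have "\<And>j. real (card {k. k < K \<and> P j k}) = (\<Sum>k<K. if P j k then 1 else 0)"
  proof -
    fix j
    have "{k. k < K \<and> P j k} = {..<K} \<inter> {k. P j k}" by auto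
    then show "real (card {k. k < K \<and> P j k}) = (\<Sum>k<K. if P j k then 1 else 0)"
      using sum.If_cases[of "{..<K}" "\<lambda>k. P j k" "\<lambda>_. 1::real" "\<lambda>_. 0"] by simp
  qed
  ultimately show ?thesis by simp
qed

lemma add_minus_cancel_mat: "A \<in> carrier_mat r c \<Longrightarrow> B \<in> carrier_mat r c \<Longrightarrow> C \<in> carrier_mat r c \<Longrightarrow>
  (A + C) - (B + C) = A - (B :: complex mat)"
  by (rule eq_matI, auto)


theorem lemma3p1:
  fixes m :: nat
    and N :: "nat \<Rightarrow> nat \<Rightarrow> nat"
    and y :: "nat \<Rightarrow> real"
    and M :: "nat \<Rightarrow> 'a measure"
    and X :: "nat \<Rightarrow> nat \<Rightarrow> nat \<Rightarrow> nat \<Rightarrow> 'a \<Rightarrow> complex"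
    and F :: "nat \<Rightarrow> (nat \<Rightarrow> complex mat) \<Rightarrow> complex mat"
    and \<tau> :: "nat \<Rightarrow> real"
    and B :: "nat \<Rightarrow> complex mat"
  assumes m_pos: "m \<ge> 1"
    and dim0: "\<And>n. N n 0 = n"
    and dim_pos: "\<And>n q. n \<ge> 1 \<Longrightarrow> q \<in> {1..m} \<Longrightarrow> N n q > 0"
    and ratio: "\<And>q. q \<in> {1..m} \<Longrightarrow> y q > 0 \<and> (\<lambda>n. real n / real (N n q)) \<longlonglongrightarrow> y q"
    and prob: "\<And>n. prob_space (M n)"
    and meas: "\<And>n q j k. X n q j k \<in> borel_measurable (M n)"
    and indep: "\<And>n. n \<ge> 1 \<Longrightarrow> prob_space.indep_vars (M n) (\<lambda>_. borel)
                  (\<lambda>(q, j, k). X n q j k) {(q, j, k). q \<in> {1..m} \<and> j < N n (q - 1) \<and> k < N n q}"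
    and sq_int: "\<And>n q j k. n \<ge> 1 \<Longrightarrow> q \<in> {1..m} \<Longrightarrow> j < N n (q - 1) \<Longrightarrow> k < N n q \<Longrightarrow>
                  integrable (M n) (\<lambda>\<omega>. (cmod (X n q j k \<omega>))^2)"
    and mean0: "\<And>n q j k. n \<ge> 1 \<Longrightarrow> q \<in> {1..m} \<Longrightarrow> j < N n (q - 1) \<Longrightarrow> k < N n q \<Longrightarrow>
                  prob_space.expectation (M n) (X n q j k) = 0"
    and var1: "\<And>n q j k. n \<ge> 1 \<Longrightarrow> q \<in> {1..m} \<Longrightarrow> j < N n (q - 1) \<Longrightarrow> k < N n q \<Longrightarrow>
                  prob_space.expectation (M n) (\<lambda>\<omega>. (cmod (X n q j k \<omega>))^2) = 1"
    and F_dim: "\<And>n Z. n \<ge> 1 \<Longrightarrow> (\<forall>q\<in>{1..m}. Z q \<in> carrier_mat (N n (q - 1)) (N n q)) \<Longrightarrow>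
                  F n Z \<in> carrier_mat n (N n m)"
    and lindeberg_cond: "\<And>t. t > 0 \<Longrightarrow> (\<lambda>n. lindeberg M m N X n t) \<longlonglongrightarrow> 0"
    and rank_cond: "\<exists>CF::real. \<forall>n\<ge>1. \<forall>A Bm.
                  (\<forall>q\<in>{1..m}. A q \<in> carrier_mat (N n (q - 1)) (N n q) \<and>
                               Bm q \<in> carrier_mat (N n (q - 1)) (N n q)) \<longrightarrow>
                  real (mrank (F n A - F n Bm)) \<le> CF * (\<Sum>q\<in>{1..m}. real (mrank (A q - Bm q)))"
    and tau_lim: "\<tau> \<longlonglongrightarrow> 0"
    and tau_lind: "(\<lambda>n. lindeberg M m N X n (\<tau> n) / (\<tau> n)^4) \<longlonglongrightarrow> 0"
    and tau_low: "\<And>n. n \<ge> 1 \<Longrightarrow> \<tau> n \<ge> real n powr (-1/3)"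
    and B_dim: "\<And>n. n \<ge> 1 \<Longrightarrow> B n \<in> carrier_mat n (N n m)"
  shows "\<exists>C::real. \<forall>n\<ge>1.
     (\<integral>\<^sup>+ \<omega>. (SUP x::real. ennreal \<bar>esd n (F n (rmat N X n \<omega>) + B n) x
                                   - esd n (F n (rmat N (trunc \<tau> X) n \<omega>) + B n) x\<bar>) \<partial>M n)
        \<le> ennreal (C * (\<tau> n)^2)
     \<and> (\<forall>z. Im z > 0 \<longrightarrow>
        (\<integral>\<^sup>+ \<omega>. ennreal (cmod (stieltjes n (F n (rmat N X n \<omega>) + B n) z
                               - stieltjes n (F n (rmat N (trunc \<tau> X) n \<omega>) + B n) z)) \<partial>M n)
        \<le> ennreal (C / Im z * (\<tau> n)^2))"
proof -
  obtain CF where CFp: "\<forall>n\<ge>1. \<forall>A Bm.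
                  (\<forall>q\<in>{1..m}. A q \<in> carrier_mat (N n (q - 1)) (N n q) \<and>
                               Bm q \<in> carrier_mat (N n (q - 1)) (N n q)) \<longrightarrow>
                  real (mrank (F n A - F n Bm)) \<le> CF * (\<Sum>q\<in>{1..m}. real (mrank (A q - Bm q)))"
    using rank_cond by blast
  define C0 where "C0 = max CF 0"
  have C0: "C0 \<ge> 0" unfolding C0_def by simp
  define L where "L n = lindeberg M m N X n (\<tau> n)" for n
  have "convergent (\<lambda>n. L n / (\<tau> n)^4)" using tau_lind unfolding L_def by (rule convergentI)
  then have "Bseq (\<lambda>n. L n / (\<tau> n)^4)" by (rule convergent_imp_Bseq)
  then obtain K where K: "K > 0" and Kb: "\<And>n. norm (L n / (\<tau> n)^4) \<le> K" by (auto elim: BseqE)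
  define C where "C = 10 * C0 * K"
  show ?thesis
  proof (rule exI[of _ C], rule allI, rule impI, rule conjI)
    fix n :: nat assume n: "n \<ge> 1"
    interpret P: prob_space "M n" by (rule prob)
    have npos: "real n > 0" using n by simp
    have taupos: "\<tau> n > 0"
    proof -
      have "real n powr (-1/3) > 0" using npos by simp
      then show ?thesis using tau_low[OF n] by linarith
    qed
    define a where "a = \<tau> n * sqrt (real n)"
    have apos: "a > 0" unfolding a_def using taupos npos by simp
    have a2: "a^2 = (\<tau> n)^2 * real n" unfolding a_def using npos by (simp add: power_mult_distrib)
    define cnt :: "'a \<Rightarrow> real" where "cnt \<omega> = (\<Sum>q\<in>{1..m}. \<Sum>j<N n (q - 1). \<Sum>k<N n q. indicator {t. t > a} (cmod (X n q j k \<omega>)))" for \<omega>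
    have cnt0: "\<And>\<omega>. cnt \<omega> \<ge> 0" unfolding cnt_def by (intro sum_nonneg, auto)
    define A where "A \<omega> = rmat N X n \<omega>" for \<omega>
    define Ah where "Ah \<omega> = rmat N (trunc \<tau> X) n \<omega>" for \<omega>
    have Ac: "\<And>\<omega> q. A \<omega> q \<in> carrier_mat (N n (q - 1)) (N n q)" unfolding A_def rmat_def by simp
    have Ahc: "\<And>\<omega> q. Ah \<omega> q \<in> carrier_mat (N n (q - 1)) (N n q)" unfolding Ah_def rmat_def by simp
    have FA: "\<And>\<omega>. F n (A \<omega>) \<in> carrier_mat n (N n m)" using F_dim[OF n] Ac by blast
    have FAh: "\<And>\<omega>. F n (Ah \<omega>) \<in> carrier_mat n (N n m)" using F_dim[OF n] Ahc by blast
    have Bc: "B n \<in> carrier_mat n (N n m)" by (rule B_dim[OF n])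
    have rkq: "\<And>\<omega> q. q \<in> {1..m} \<Longrightarrow> real (mrank (A \<omega> q - Ah \<omega> q)) \<le>
                (\<Sum>j<N n (q - 1). \<Sum>k<N n q. indicator {t. t > a} (cmod (X n q j k \<omega>)))"
    proof -
      fix \<omega> q assume q: "q \<in> {1..m}"
      have Nq: "N n q > 0" using dim_pos[OF n q] .
      have Dc: "A \<omega> q - Ah \<omega> q \<in> carrier_mat (N n (q - 1)) (N n q)" by (rule minus_carrier_mat[OF Ahc])
      have "mrank (A \<omega> q - Ah \<omega> q) \<le> card {(j,k). j < N n (q - 1) \<and> k < N n q \<and> (A \<omega> q - Ah \<omega> q) $$ (j,k) \<noteq> 0}"
        by (rule rank_le_card_nz[OF Dc])
      also have "\<dots> \<le> card {(j,k). j < N n (q - 1) \<and> k < N n q \<and> cmod (X n q j k \<omega>) > a}"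
      proof (rule card_mono)
        show "finite {(j,k). j < N n (q - 1) \<and> k < N n q \<and> cmod (X n q j k \<omega>) > a}"
          by (rule finite_subset[of _ "{..<N n (q - 1)} \<times> {..<N n q}"], auto)
        show "{(j,k). j < N n (q - 1) \<and> k < N n q \<and> (A \<omega> q - Ah \<omega> q) $$ (j,k) \<noteq> 0}
              \<subseteq> {(j,k). j < N n (q - 1) \<and> k < N n q \<and> cmod (X n q j k \<omega>) > a}"
        proof (rule subsetI)
          fix jk assume "jk \<in> {(j,k). j < N n (q - 1) \<and> k < N n q \<and> (A \<omega> q - Ah \<omega> q) $$ (j,k) \<noteq> 0}"
          then obtain j k where jk: "jk = (j,k)" and j: "j < N n (q - 1)" and k: "k < N n q"
            and nz: "(A \<omega> q - Ah \<omega> q) $$ (j,k) \<noteq> 0" by auto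
          have "(A \<omega> q - Ah \<omega> q) $$ (j,k) = A \<omega> q $$ (j,k) - Ah \<omega> q $$ (j,k)"
            using Ac[of \<omega> q] Ahc[of \<omega> q] j k by simp
          also have "\<dots> = (X n q j k \<omega> - trunc \<tau> X n q j k \<omega>) / complex_of_real (sqrt (real (N n q)))"
            unfolding A_def Ah_def rmat_def using j k by (simp add: diff_divide_distrib)
          finally have "X n q j k \<omega> \<noteq> trunc \<tau> X n q j k \<omega>" using nz by auto
          then have "a < cmod (X n q j k \<omega>)" unfolding trunc_def a_def by (auto split: if_splits)
          then show "jk \<in> {(j,k). j < N n (q - 1) \<and> k < N n q \<and> cmod (X n q j k \<omega>) > a}"
            using jk j k by simp
        qed
      qed
      finally have "real (mrank (A \<omega> q - Ah \<omega> q)) \<le> real (card {(j,k). j < N n (q - 1) \<and> k < N n q \<and> cmod (X n q j k \<omega>) > a})"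
        by simp
      also have "\<dots> = (\<Sum>j<N n (q - 1). \<Sum>k<N n q. if cmod (X n q j k \<omega>) > a then 1 else 0)"
        by (rule card_pairs_real)
      also have "\<dots> = (\<Sum>j<N n (q - 1). \<Sum>k<N n q. indicator {t. t > a} (cmod (X n q j k \<omega>)))"
        by (simp only: indicator_def of_bool_def mem_Collect_eq)
      finally show "real (mrank (A \<omega> q - Ah \<omega> q)) \<le> (\<Sum>j<N n (q - 1). \<Sum>k<N n q. indicator {t. t > a} (cmod (X n q j k \<omega>)))" .
    qed
    have Rk: "\<And>\<omega>. real (mrank ((F n (A \<omega>) + B n) - (F n (Ah \<omega>) + B n))) \<le> C0 * cnt \<omega>"
    proof -
      fix \<omega>
      have "(F n (A \<omega>) + B n) - (F n (Ah \<omega>) + B n) = F n (A \<omega>) - F n (Ah \<omega>)"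
        by (rule add_minus_cancel_mat[OF FA FAh Bc])
      moreover have "real (mrank (F n (A \<omega>) - F n (Ah \<omega>))) \<le> CF * (\<Sum>q\<in>{1..m}. real (mrank (A \<omega> q - Ah \<omega> q)))"
        using CFp n Ac Ahc by blast
      moreover have "CF * (\<Sum>q\<in>{1..m}. real (mrank (A \<omega> q - Ah \<omega> q))) \<le> C0 * (\<Sum>q\<in>{1..m}. real (mrank (A \<omega> q - Ah \<omega> q)))"
        unfolding C0_def by (intro mult_right_mono, auto intro: sum_nonneg)
      moreover have "(\<Sum>q\<in>{1..m}. real (mrank (A \<omega> q - Ah \<omega> q))) \<le> cnt \<omega>"
        unfolding cnt_def by (rule sum_mono, rule rkq)
      ultimately show "real (mrank ((F n (A \<omega>) + B n) - (F n (Ah \<omega>) + B n))) \<le> C0 * cnt \<omega>"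
        using C0 by (metis (no_types, lifting) dual_order.trans mult_left_mono)
    qed
    have M1c: "\<And>\<omega>. F n (A \<omega>) + B n \<in> carrier_mat n (N n m)" using FA Bc by simp
    have M2c: "\<And>\<omega>. F n (Ah \<omega>) + B n \<in> carrier_mat n (N n m)" using FAh Bc by simp
    have cm: "(\<lambda>\<omega>. ennreal (cnt \<omega>)) \<in> borel_measurable (M n)"
      unfolding cnt_def using meas by measurable
    have icnt: "(\<integral>\<^sup>+\<omega>. ennreal (cnt \<omega>) \<partial>M n) \<le> ennreal (real n * L n / (\<tau> n)^2)"
    proof -
      have "(\<integral>\<^sup>+\<omega>. ennreal (cnt \<omega>) \<partial>M n) \<le> ennreal ((\<Sum>q\<in>{1..m}. \<Sum>j<N n (q - 1). \<Sum>k<N n q. \<integral>\<omega>. (cmod (X n q j k \<omega>))^2 * indicator {t. t > a} (cmod (X n q j k \<omega>)) \<partial>M n) / a^2)"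
        unfolding cnt_def by (rule count_integral_bound[OF meas sq_int[OF n] apos])
      also have "(\<Sum>q\<in>{1..m}. \<Sum>j<N n (q - 1). \<Sum>k<N n q. \<integral>\<omega>. (cmod (X n q j k \<omega>))^2 * indicator {t. t > a} (cmod (X n q j k \<omega>)) \<partial>M n)
          = (real n)^2 * L n"
        unfolding L_def lindeberg_def a_def using npos by simp
      also have "(real n)^2 * L n / a^2 = real n * L n / (\<tau> n)^2"
        unfolding a2 using npos taupos by (simp add: power2_eq_square field_simps)
      finally show ?thesis .
    qed
    have Lb: "L n / (\<tau> n)^2 \<le> K * (\<tau> n)^2"
    proof -
      have "L n / (\<tau> n)^4 \<le> norm (L n / (\<tau> n)^4)" unfolding real_norm_def by (rule abs_ge_self)
      then have "L n / (\<tau> n)^4 \<le> K" using Kb[of n] by linarith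
      then have "L n \<le> K * (\<tau> n)^4" using taupos by (simp add: divide_le_eq)
      then show ?thesis using taupos by (simp add: divide_le_eq power_mult_distrib[symmetric] power2_eq_square power4_eq_xxxx)
    qed
    show "(\<integral>\<^sup>+ \<omega>. (SUP x::real. ennreal \<bar>esd n (F n (rmat N X n \<omega>) + B n) x
                                   - esd n (F n (rmat N (trunc \<tau> X) n \<omega>) + B n) x\<bar>) \<partial>M n)
        \<le> ennreal (C * (\<tau> n)^2)"
    proof -
      have "(\<integral>\<^sup>+ \<omega>. (SUP x::real. ennreal \<bar>esd n (F n (rmat N X n \<omega>) + B n) x
                                   - esd n (F n (rmat N (trunc \<tau> X) n \<omega>) + B n) x\<bar>) \<partial>M n)
            \<le> (\<integral>\<^sup>+ \<omega>. ennreal (C0 / real n) * ennreal (cnt \<omega>) \<partial>M n)"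
      proof (rule nn_integral_mono)
        fix \<omega>
        show "(SUP x::real. ennreal \<bar>esd n (F n (rmat N X n \<omega>) + B n) x
                                   - esd n (F n (rmat N (trunc \<tau> X) n \<omega>) + B n) x\<bar>) \<le> ennreal (C0 / real n) * ennreal (cnt \<omega>)"
        proof (rule SUP_least)
          fix x :: real
          have "\<bar>esd n (F n (A \<omega>) + B n) x - esd n (F n (Ah \<omega>) + B n) x\<bar>
                \<le> real (mrank ((F n (A \<omega>) + B n) - (F n (Ah \<omega>) + B n))) / real n"
            by (rule rank_diff_bounds(1)[OF M1c M2c n])
          also have "\<dots> \<le> C0 * cnt \<omega> / real n" using Rk npos by (simp add: divide_right_mono)
          finally have "\<bar>esd n (F n (A \<omega>) + B n) x - esd n (F n (Ah \<omega>) + B n) x\<bar> \<le> C0 / real n * cnt \<omega>" by simp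
          then show "ennreal \<bar>esd n (F n (rmat N X n \<omega>) + B n) x - esd n (F n (rmat N (trunc \<tau> X) n \<omega>) + B n) x\<bar>
                     \<le> ennreal (C0 / real n) * ennreal (cnt \<omega>)"
            unfolding A_def Ah_def using C0 npos cnt0 by (simp add: ennreal_mult[symmetric] ennreal_leI)
        qed
      qed
      also have "\<dots> = ennreal (C0 / real n) * (\<integral>\<^sup>+ \<omega>. ennreal (cnt \<omega>) \<partial>M n)"
        by (rule nn_integral_cmult[OF cm])
      also have "\<dots> \<le> ennreal (C0 / real n) * ennreal (real n * L n / (\<tau> n)^2)"
        by (rule mult_left_mono[OF icnt], simp)
      also have "\<dots> = ennreal (C0 / real n * (real n * L n / (\<tau> n)^2))"
        by (rule ennreal_mult'[symmetric], insert C0 npos, simp)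
      also have "\<dots> = ennreal (C0 * (L n / (\<tau> n)^2))"
        using npos by simp
      also have "\<dots> \<le> ennreal (C * (\<tau> n)^2)"
      proof (rule ennreal_leI)
        have "C0 * (L n / (\<tau> n)^2) \<le> C0 * (K * (\<tau> n)^2)" by (rule mult_left_mono[OF Lb C0])
        also have "\<dots> \<le> C * (\<tau> n)^2" unfolding C_def using C0 K by (simp add: mult_right_mono)
        finally show "C0 * (L n / (\<tau> n)^2) \<le> C * (\<tau> n)^2" .
      qed
      finally show ?thesis .
    qed
    show "\<forall>z. Im z > 0 \<longrightarrow>
        (\<integral>\<^sup>+ \<omega>. ennreal (cmod (stieltjes n (F n (rmat N X n \<omega>) + B n) z
                               - stieltjes n (F n (rmat N (trunc \<tau> X) n \<omega>) + B n) z)) \<partial>M n)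
        \<le> ennreal (C / Im z * (\<tau> n)^2)"
    proof (intro allI impI)
      fix z :: complex assume vz: "Im z > 0"
      have "(\<integral>\<^sup>+ \<omega>. ennreal (cmod (stieltjes n (F n (rmat N X n \<omega>) + B n) z
                               - stieltjes n (F n (rmat N (trunc \<tau> X) n \<omega>) + B n) z)) \<partial>M n)
            \<le> (\<integral>\<^sup>+ \<omega>. ennreal (10 * C0 / (real n * Im z)) * ennreal (cnt \<omega>) \<partial>M n)"
      proof (rule nn_integral_mono)
        fix \<omega>
        have "cmod (stieltjes n (F n (A \<omega>) + B n) z - stieltjes n (F n (Ah \<omega>) + B n) z)
                \<le> 10 * real (mrank ((F n (A \<omega>) + B n) - (F n (Ah \<omega>) + B n))) / (real n * Im z)"
          by (rule rank_diff_bounds(2)[OF M1c M2c n vz])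
        also have "\<dots> \<le> 10 * (C0 * cnt \<omega>) / (real n * Im z)"
          using Rk npos vz by (intro divide_right_mono, auto)
        also have "\<dots> = 10 * C0 / (real n * Im z) * cnt \<omega>" by simp
        finally show "ennreal (cmod (stieltjes n (F n (rmat N X n \<omega>) + B n) z
                               - stieltjes n (F n (rmat N (trunc \<tau> X) n \<omega>) + B n) z))
              \<le> ennreal (10 * C0 / (real n * Im z)) * ennreal (cnt \<omega>)"
          unfolding A_def Ah_def using C0 npos vz cnt0 by (simp add: ennreal_mult[symmetric] ennreal_leI)
      qed
      also have "\<dots> = ennreal (10 * C0 / (real n * Im z)) * (\<integral>\<^sup>+ \<omega>. ennreal (cnt \<omega>) \<partial>M n)"
        by (rule nn_integral_cmult[OF cm])
      also have "\<dots> \<le> ennreal (10 * C0 / (real n * Im z)) * ennreal (real n * L n / (\<tau> n)^2)"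
        by (rule mult_left_mono[OF icnt], simp)
      also have "\<dots> = ennreal (10 * C0 / (real n * Im z) * (real n * L n / (\<tau> n)^2))"
        by (rule ennreal_mult'[symmetric], insert C0 npos vz, simp)
      also have "\<dots> = ennreal (10 * C0 / Im z * (L n / (\<tau> n)^2))"
        using npos by (simp add: field_simps)
      also have "\<dots> \<le> ennreal (C / Im z * (\<tau> n)^2)"
      proof (rule ennreal_leI)
        have c: "10 * C0 / Im z \<ge> 0" using C0 vz by simp
        have "10 * C0 / Im z * (L n / (\<tau> n)^2) \<le> 10 * C0 / Im z * (K * (\<tau> n)^2)" by (rule mult_left_mono[OF Lb c])
        also have "\<dots> = C / Im z * (\<tau> n)^2" unfolding C_def by simp
        finally show "10 * C0 / Im z * (L n / (\<tau> n)^2) \<le> C / Im z * (\<tau> n)^2" .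
      qed
      finally show "(\<integral>\<^sup>+ \<omega>. ennreal (cmod (stieltjes n (F n (rmat N X n \<omega>) + B n) z
                               - stieltjes n (F n (rmat N (trunc \<tau> X) n \<omega>) + B n) z)) \<partial>M n)
        \<le> ennreal (C / Im z * (\<tau> n)^2)" .
    qed
  qed
qed


end
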